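(* Let $C$ be a bivariate copula and $\theta\in(0,1)$. Define $C_{\theta,M}(u,v)=(1-\theta)C(u,v)+\theta M(u,v)$ and $C_{\theta,\Pi}(u,v)=(1-\theta)C(u,v)+\theta\Pi(u,v)$, where $M(u,v)=\min(u,v)$ and $\Pi(u,v)=uv$. Then: (1) if $\lim_{n\to\infty}C^n(u,v)=C_o(u,v)$ for all $(u,v)\in[0,1]^2$, then $\lim_{n\to\infty}C^n_{\theta,M}(u,v)=C_o(u,v)$ for all $(u,v)\in[0,1]^2$; (2) $\lim_{n\to\infty}C^n_{\theta,\Pi}(u,v)=\Pi(u,v)$ for all $(u,v)\in[0,1]^2$.
   Context: A bivariate copula is a bivariate distribution function on $[0,1]^2$ with uniform marginals on $[0,1]$. For copulas $C,D$, the fold product is $C*D(x,y)=\int_0^1 C_{,2}(x,t)D_{,1}(t,y)\,dt$, where $C_{,i}$ denotes the partial derivative with respect to the $i$-th variable. The $n$-fold product is defined by $C^1=C$ and $C^n=C^{n-1}*C$ for $n>1$. *)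

theory Defs
  imports "HOL-Analysis.Analysis"
begin

text \<open>A bivariate copula, represented as a real function of two real variables whose
  values on the unit square are the relevant ones: grounded, uniform marginals, 2-increasing.\<close>
definition is_copula :: "(real \<Rightarrow> real \<Rightarrow> real) \<Rightarrow> bool" where
  "is_copula C \<longleftrightarrow>
     (\<forall>u\<in>{0..1}. C u 0 = 0 \<and> C 0 u = 0 \<and> C u 1 = u \<and> C 1 u = u) \<and>
     (\<forall>u1 u2 v1 v2. 0 \<le> u1 \<and> u1 \<le> u2 \<and> u2 \<le> 1 \<and> 0 \<le> v1 \<and> v1 \<le> v2 \<and> v2 \<le> 1 \<longrightarrow>
        C u2 v2 - C u2 v1 - C u1 v2 + C u1 v1 \<ge> 0)"

definition copM :: "real \<Rightarrow> real \<Rightarrow> real" where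
  "copM u v = min u v"

definition copPi :: "real \<Rightarrow> real \<Rightarrow> real" where
  "copPi u v = u * v"

text \<open>Partial derivatives
  exist almost everywhere; the integral (Henstock-Kurzweil, equal to the Lebesgue integral
  here) does not depend on the values on the exceptional null set.\<close>
definition fold_prod :: "(real \<Rightarrow> real \<Rightarrow> real) \<Rightarrow> (real \<Rightarrow> real \<Rightarrow> real) \<Rightarrow> real \<Rightarrow> real \<Rightarrow> real" where
  "fold_prod C D x y = integral {0..1} (\<lambda>t. deriv (\<lambda>s. C x s) t * deriv (\<lambda>s. D s y) t)"

text \<open>n-fold product: C^1 = C, C^(n+1) = C^n * C.  We set C^0 = M (the unit of the fold
  product); the index 0 is irrelevant for limits as n tends to infinity.\<close>
primrec fold_pow :: "(real \<Rightarrow> real \<Rightarrow> real) \<Rightarrow> nat \<Rightarrow> real \<Rightarrow> real \<Rightarrow> real" where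
  "fold_pow C 0 = copM"
| "fold_pow C (Suc n) = (if n = 0 then C else fold_prod (fold_pow C n) C)"

end

theory Submission
  imports Defs
begin

lemma vitali_A:
  fixes g :: "real \<Rightarrow> real" and p K :: real
  assumes mono: "\<And>x y. x \<le> y \<Longrightarrow> g x \<le> g y"
    and lip: "\<And>x y. \<bar>g x - g y\<bar> \<le> K * \<bar>x - y\<bar>"
    and U: "open U" "U \<in> lmeasurable" "A \<subseteq> U" and p: "p \<ge> 0"
    and cov: "\<And>x d. x \<in> A \<Longrightarrow> d > 0 \<Longrightarrow> \<exists>a b. a \<le> x \<and> x \<le> b \<and> 0 < b - a \<and> b - a < d \<and> g b - g a \<le> p * (b - a)"
  obtains T where "T \<in> lmeasurable" "g ` A \<subseteq> T" "measure lebesgue T \<le> p * measure lebesgue U"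
proof -
  define KK where "KK = {(c,r). 0 < r \<and> cball c r \<subseteq> U \<and> g (c+r) - g (c-r) \<le> p * (2*r)}"
  have r: "\<And>i. i \<in> KK \<Longrightarrow> 0 < snd i" by (auto simp: KK_def)
  have S: "\<exists>i. i \<in> KK \<and> x \<in> cball (fst i) (snd i) \<and> snd i < d" if xA: "x \<in> A" and d0: "0 < d" for x d
  proof -
    have "x \<in> U" using xA U(3) by blast
    then obtain e where e: "e > 0" "ball x e \<subseteq> U" using U(1) openE by metis
    have "min d e > 0" using e d0 by simp
    then obtain a b where ab: "a \<le> x" "x \<le> b" "0 < b - a" "b - a < min d e" "g b - g a \<le> p * (b - a)"
      using cov[OF xA, of "min d e"] by blast
    have cb: "cball ((a+b)/2) ((b-a)/2) = {a..b}" by (simp add: atLeastAtMost_eq_cball)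
    have be: "b - a < e" "b - a < d" using ab(4) by auto
    have sub: "{a..b} \<subseteq> ball x e"
    proof
      fix y assume "y \<in> {a..b}"
      then have "\<bar>x - y\<bar> < e" using ab(1,2) be(1) by auto
      then show "y \<in> ball x e" by (simp add: dist_real_def)
    qed
    have e1: "(a+b)/2 + (b-a)/2 = b" "(a+b)/2 - (b-a)/2 = a" "2 * ((b-a)/2) = b - a" by (simp_all add: field_simps)
    have "0 < (b-a)/2" using ab(3) by simp
    moreover have "cball ((a+b)/2) ((b-a)/2) \<subseteq> U" using cb sub e(2) by simp
    moreover have "g ((a+b)/2 + (b-a)/2) - g ((a+b)/2 - (b-a)/2) \<le> p * (2 * ((b-a)/2))"
      unfolding e1 by (rule ab(5))
    ultimately have "((a+b)/2, (b-a)/2) \<in> KK" unfolding KK_def by simp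
    moreover have "x \<in> cball ((a+b)/2) ((b-a)/2)" using cb ab(1,2) by simp
    moreover have "(b-a)/2 < d" using be d0 by simp
    ultimately show ?thesis by (intro exI[of _ "((a+b)/2, (b-a)/2)"]) simp
  qed
  obtain C where C: "countable C" "C \<subseteq> KK"
     "pairwise (\<lambda>i j. disjnt (cball (fst i) (snd i)) (cball (fst j) (snd j))) C"
     "negligible (A - (\<Union>i \<in> C. cball (fst i) (snd i)))"
    by (rule Vitali_covering_theorem_cballs[of KK snd A fst, OF r S])
  define N where "N = A - (\<Union>i \<in> C. cball (fst i) (snd i))"
  define I where "I = (\<lambda>i::real*real. {g (fst i - snd i) .. g (fst i + snd i)})"
  have negN: "negligible (g ` N)"
  proof (rule negligible_locally_Lipschitz_image)
    show "negligible N" using C N_def by simp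
    show "\<exists>T B. open T \<and> x \<in> T \<and> (\<forall>y\<in>N \<inter> T. norm (g y - g x) \<le> B * norm (y - x))" for x
      using lip by (intro exI[of _ UNIV] exI[of _ K]) auto
  qed auto
  have bnd: "measure lebesgue (\<Union>i\<in>I'. I i) \<le> p * measure lebesgue U" if "I' \<subseteq> C" "finite I'" for I'
  proof -
    have "measure lebesgue (\<Union>i\<in>I'. I i) \<le> (\<Sum>i\<in>I'. measure lebesgue (I i))"
      by (rule measure_UNION_le) (auto simp: I_def that)
    also have "\<dots> \<le> (\<Sum>i\<in>I'. p * measure lebesgue (cball (fst i) (snd i)))"
    proof (rule sum_mono)
      fix i assume "i \<in> I'"
      then have "i \<in> KK" using that C by auto
      then show "measure lebesgue (I i) \<le> p * measure lebesgue (cball (fst i) (snd i))"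
        using p mono[of "fst i - snd i" "fst i + snd i"] by (auto simp: I_def KK_def cball_eq_atLeastAtMost)
    qed
    also have "\<dots> = p * measure lebesgue (\<Union>i\<in>I'. cball (fst i) (snd i))"
    proof -
      have "measure lebesgue (\<Union>i\<in>I'. cball (fst i) (snd i)) = (\<Sum>i\<in>I'. measure lebesgue (cball (fst i) (snd i)))"
      proof (rule measure_negligible_finite_Union_image)
        show "pairwise (\<lambda>x y. negligible (cball (fst x) (snd x) \<inter> cball (fst y) (snd y))) I'"
          using pairwise_subset[OF C(3) that(1)] by (auto simp: pairwise_def disjnt_def)
      qed (auto simp: that)
      then show ?thesis by (simp add: sum_distrib_left)
    qed
    also have "\<dots> \<le> p * measure lebesgue U"
    proof (rule mult_left_mono[OF _ p], rule measure_mono_fmeasurable)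
      have "cball (fst i) (snd i) \<subseteq> U" if "i \<in> I'" for i
      proof -
        have "i \<in> KK" using that \<open>I' \<subseteq> C\<close> C(2) by blast
        then show ?thesis by (cases i) (simp add: KK_def)
      qed
      then show "(\<Union>i\<in>I'. cball (fst i) (snd i)) \<subseteq> U" by blast
    qed (auto simp: U that)
    finally show ?thesis .
  qed
  have m1: "(\<Union>i\<in>C. I i) \<in> lmeasurable" and m2: "measure lebesgue (\<Union>i\<in>C. I i) \<le> p * measure lebesgue U"
    using fmeasurable_UN_bound[OF C(1) _ bnd] measure_UN_bound[OF C(1) _ bnd] by (auto simp: I_def)
  show ?thesis
  proof
    show "(\<Union>i\<in>C. I i) \<union> g ` N \<in> lmeasurable"
      using m1 negN by (simp add: fmeasurable.Un negligible_imp_measurable)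
    show "g ` A \<subseteq> (\<Union>i\<in>C. I i) \<union> g ` N"
    proof
      fix y assume "y \<in> g ` A"
      then obtain x where x: "x \<in> A" "y = g x" by auto
      show "y \<in> (\<Union>i\<in>C. I i) \<union> g ` N"
      proof (cases "x \<in> N")
        case False
        then obtain i where "i \<in> C" "x \<in> cball (fst i) (snd i)" using x N_def by auto
        then show ?thesis using x mono by (auto simp: I_def cball_eq_atLeastAtMost)
      qed (use x in auto)
    qed
    have "measure lebesgue ((\<Union>i\<in>C. I i) \<union> g ` N) \<le> measure lebesgue (\<Union>i\<in>C. I i) + measure lebesgue (g ` N)"
      using m1 negN by (intro measure_Un_le) (auto simp: negligible_imp_sets)
    also have "measure lebesgue (g ` N) = 0" using negN negligible_imp_measure0 by blast
    finally show "measure lebesgue ((\<Union>i\<in>C. I i) \<union> g ` N) \<le> p * measure lebesgue U" using m2 by simp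
  qed
qed


lemma vitali_B:
  fixes g :: "real \<Rightarrow> real" and q :: real
  assumes smono: "\<And>x y. x < y \<Longrightarrow> g x < g y"
    and cont: "continuous_on UNIV g"
    and V: "open V" "V \<in> lmeasurable" "g ` A \<subseteq> V" and q: "q > 0"
    and cov: "\<And>x d. x \<in> A \<Longrightarrow> d > 0 \<Longrightarrow> \<exists>a b. a \<le> x \<and> x \<le> b \<and> 0 < b - a \<and> b - a < d \<and> q * (b - a) \<le> g b - g a"
  obtains T where "T \<in> lmeasurable" "A \<subseteq> T" "q * measure lebesgue T \<le> measure lebesgue V"
proof -
  define U where "U = g -` V"
  have U: "open U" "A \<subseteq> U" using V cont open_vimage by (auto simp: U_def)
  define KK where "KK = {(c,r). 0 < r \<and> cball c r \<subseteq> U \<and> q * (2*r) \<le> g (c+r) - g (c-r)}"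
  have r: "\<And>i. i \<in> KK \<Longrightarrow> 0 < snd i" by (auto simp: KK_def)
  have S: "\<exists>i. i \<in> KK \<and> x \<in> cball (fst i) (snd i) \<and> snd i < d" if xA: "x \<in> A" and d0: "0 < d" for x d
  proof -
    have "x \<in> U" using xA U(2) by blast
    then obtain e where e: "e > 0" "ball x e \<subseteq> U" using U(1) openE by metis
    have "min d e > 0" using e d0 by simp
    then obtain a b where ab: "a \<le> x" "x \<le> b" "0 < b - a" "b - a < min d e" "q * (b - a) \<le> g b - g a"
      using cov[OF xA, of "min d e"] by blast
    have cb: "cball ((a+b)/2) ((b-a)/2) = {a..b}" by (simp add: atLeastAtMost_eq_cball)
    have be: "b - a < e" "b - a < d" using ab(4) by auto
    have sub: "{a..b} \<subseteq> ball x e"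
    proof
      fix y assume "y \<in> {a..b}"
      then have "\<bar>x - y\<bar> < e" using ab(1,2) be(1) by auto
      then show "y \<in> ball x e" by (simp add: dist_real_def)
    qed
    have e1: "(a+b)/2 + (b-a)/2 = b" "(a+b)/2 - (b-a)/2 = a" "2 * ((b-a)/2) = b - a" by (simp_all add: field_simps)
    have "0 < (b-a)/2" using ab(3) by simp
    moreover have "cball ((a+b)/2) ((b-a)/2) \<subseteq> U" using cb sub e(2) by simp
    moreover have "q * (2 * ((b-a)/2)) \<le> g ((a+b)/2 + (b-a)/2) - g ((a+b)/2 - (b-a)/2)"
      unfolding e1 by (rule ab(5))
    ultimately have "((a+b)/2, (b-a)/2) \<in> KK" unfolding KK_def by simp
    moreover have "x \<in> cball ((a+b)/2) ((b-a)/2)" using cb ab(1,2) by simp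
    moreover have "(b-a)/2 < d" using be d0 by simp
    ultimately show ?thesis by (intro exI[of _ "((a+b)/2, (b-a)/2)"]) simp
  qed
  obtain C where C: "countable C" "C \<subseteq> KK"
     "pairwise (\<lambda>i j. disjnt (cball (fst i) (snd i)) (cball (fst j) (snd j))) C"
     "negligible (A - (\<Union>i \<in> C. cball (fst i) (snd i)))"
    by (rule Vitali_covering_theorem_cballs[of KK snd A fst, OF r S])
  define N where "N = A - (\<Union>i \<in> C. cball (fst i) (snd i))"
  define I where "I = (\<lambda>i::real*real. {g (fst i - snd i) .. g (fst i + snd i)})"
  have KKi: "0 < snd i" "cball (fst i) (snd i) \<subseteq> U" "q * (2 * snd i) \<le> g (fst i + snd i) - g (fst i - snd i)"
    if "i \<in> C" for i
  proof -
    have "i \<in> KK" using that C(2) by blast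
    then show "0 < snd i" "cball (fst i) (snd i) \<subseteq> U" "q * (2 * snd i) \<le> g (fst i + snd i) - g (fst i - snd i)"
      by (cases i, simp add: KK_def)+
  qed
  have IV: "I i \<subseteq> V" if "i \<in> C" for i
  proof
    fix y assume y: "y \<in> I i"
    have le: "fst i - snd i \<le> fst i + snd i" using KKi(1)[OF that] by simp
    have "continuous_on {fst i - snd i .. fst i + snd i} g" using cont continuous_on_subset by blast
    then obtain x where x: "fst i - snd i \<le> x" "x \<le> fst i + snd i" "g x = y"
      using IVT'[of g "fst i - snd i" y "fst i + snd i"] y le by (auto simp: I_def)
    then have "x \<in> cball (fst i) (snd i)" by (simp add: cball_eq_atLeastAtMost)
    then have "x \<in> U" using KKi(2)[OF that] by blast
    then show "y \<in> V" using x by (simp add: U_def)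
  qed
  have bnd: "measure lebesgue (\<Union>i\<in>I'. cball (fst i) (snd i)) \<le> measure lebesgue V / q" if "I' \<subseteq> C" "finite I'" for I'
  proof -
    have dj: "pairwise (\<lambda>x y. disjnt (cball (fst x) (snd x)) (cball (fst y) (snd y))) I'"
      using pairwise_subset[OF C(3) that(1)] .
    have "measure lebesgue (\<Union>i\<in>I'. cball (fst i) (snd i)) = (\<Sum>i\<in>I'. measure lebesgue (cball (fst i) (snd i)))"
    proof (rule measure_negligible_finite_Union_image)
      show "pairwise (\<lambda>x y. negligible (cball (fst x) (snd x) \<inter> cball (fst y) (snd y))) I'"
        using dj by (auto simp: pairwise_def disjnt_def)
    qed (auto simp: that)
    moreover have "measure lebesgue (cball (fst i) (snd i)) = 2 * snd i" if "i \<in> I'" for i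
    proof -
      have "0 < snd i" using KKi(1) that \<open>I' \<subseteq> C\<close> by blast
      then show ?thesis by (simp add: cball_eq_atLeastAtMost)
    qed
    ultimately have "q * measure lebesgue (\<Union>i\<in>I'. cball (fst i) (snd i)) = (\<Sum>i\<in>I'. q * (2 * snd i))"
      by (simp add: sum_distrib_left)
    also have "\<dots> \<le> (\<Sum>i\<in>I'. measure lebesgue (I i))"
    proof (rule sum_mono)
      fix i assume "i \<in> I'"
      then have "i \<in> C" using that by blast
      then show "q * (2 * snd i) \<le> measure lebesgue (I i)"
        using KKi[of i] by (simp add: I_def)
    qed
    also have "\<dots> = measure lebesgue (\<Union>i\<in>I'. I i)"
    proof (rule measure_negligible_finite_Union_image[symmetric])
      show "pairwise (\<lambda>x y. negligible (I x \<inter> I y)) I'"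
      proof (rule pairwiseI)
        fix i j assume ij: "i \<in> I'" "j \<in> I'" "i \<noteq> j"
        then have "disjnt (cball (fst i) (snd i)) (cball (fst j) (snd j))" using dj by (auto simp: pairwise_def)
        then have "fst i + snd i < fst j - snd j \<or> fst j + snd j < fst i - snd i"
          using KKi[of i] KKi[of j] ij that(1)
          by (auto simp: disjnt_def cball_eq_atLeastAtMost)
        then have "g (fst i + snd i) < g (fst j - snd j) \<or> g (fst j + snd j) < g (fst i - snd i)"
          using smono by blast
        then have "I i \<inter> I j = {}" by (auto simp: I_def)
        then show "negligible (I i \<inter> I j)" by simp
      qed
    qed (auto simp: that I_def)
    also have "\<dots> \<le> measure lebesgue V"
    proof (rule measure_mono_fmeasurable)
      show "(\<Union>i\<in>I'. I i) \<subseteq> V" using IV that(1) by blast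
    qed (auto simp: V that I_def)
    finally show ?thesis using q by (simp add: field_simps)
  qed
  have m1: "(\<Union>i\<in>C. cball (fst i) (snd i)) \<in> lmeasurable"
    and m2: "measure lebesgue (\<Union>i\<in>C. cball (fst i) (snd i)) \<le> measure lebesgue V / q"
    using fmeasurable_UN_bound[OF C(1) _ bnd] measure_UN_bound[OF C(1) _ bnd] by auto
  have negN: "negligible N" using C(4) by (simp add: N_def)
  show ?thesis
  proof
    show "(\<Union>i\<in>C. cball (fst i) (snd i)) \<union> N \<in> lmeasurable"
      using m1 negN by (simp add: fmeasurable.Un negligible_imp_measurable)
    show "A \<subseteq> (\<Union>i\<in>C. cball (fst i) (snd i)) \<union> N" by (auto simp: N_def)
    have "measure lebesgue ((\<Union>i\<in>C. cball (fst i) (snd i)) \<union> N) \<le> measure lebesgue (\<Union>i\<in>C. cball (fst i) (snd i)) + measure lebesgue N"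
      using m1 negN by (intro measure_Un_le) (auto simp: negligible_imp_sets)
    also have "measure lebesgue N = 0" using negN negligible_imp_measure0 by blast
    finally show "q * measure lebesgue ((\<Union>i\<in>C. cball (fst i) (snd i)) \<union> N) \<le> measure lebesgue V"
      using m2 q by (smt (verit) divide_pos_pos mult_left_mono pos_le_divide_eq mult.commute)
  qed
qed


lemma outer_open_measure:
  assumes S: "S \<in> lmeasurable" and e: "e > 0"
  obtains U where "open U" "S \<subseteq> U" "U \<in> lmeasurable" "measure lebesgue U \<le> measure lebesgue S + e"
proof -
  obtain U where U: "open U" "S \<subseteq> U" "(U - S) \<in> lmeasurable" "emeasure lebesgue (U - S) < ennreal e"
    using sets_lebesgue_outer_open[of S e] S e by (auto simp: fmeasurable_def)
  have eq: "U = S \<union> (U - S)" using U by auto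
  have Um: "U \<in> lmeasurable" using S U(3) eq by (metis fmeasurable.Un)
  have "measure lebesgue (U - S) \<le> e"
    using U(3,4) e by (simp add: emeasure_eq_measure2 ennreal_less_iff less_imp_le)
  moreover have "measure lebesgue U \<le> measure lebesgue S + measure lebesgue (U - S)"
    using S U(3) eq by (metis measure_Un_le fmeasurable_def mem_Collect_eq)
  ultimately show ?thesis using that U Um by force
qed

definition dq :: "(real \<Rightarrow> real) \<Rightarrow> real \<Rightarrow> real \<Rightarrow> real" where
  "dq g x h = (g (x + h) - g x) / h"

definition Ebad :: "(real \<Rightarrow> real) \<Rightarrow> real \<Rightarrow> real \<Rightarrow> nat \<Rightarrow> real set" where
  "Ebad g p q n = {x. (\<exists>\<^sub>F h in at 0. dq g x h < p) \<and> (\<exists>\<^sub>F h in at 0. dq g x h > q)} \<inter> ball 0 (real n)"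

lemma frequently_at0_real:
  "(\<exists>\<^sub>F h in at (0::real). P h) \<longleftrightarrow> (\<forall>m::nat. \<exists>h. h \<noteq> 0 \<and> \<bar>h\<bar> < 1 / Suc m \<and> P h)"
proof
  assume L: "\<exists>\<^sub>F h in at (0::real). P h"
  show "\<forall>m::nat. \<exists>h. h \<noteq> 0 \<and> \<bar>h\<bar> < 1 / Suc m \<and> P h"
  proof
    fix m :: nat
    have "(1::real) / Suc m > 0" by simp
    then show "\<exists>h. h \<noteq> 0 \<and> \<bar>h\<bar> < 1 / Suc m \<and> P h"
      using L unfolding frequently_at by (auto simp: dist_real_def)
  qed
next
  assume R: "\<forall>m::nat. \<exists>h. h \<noteq> 0 \<and> \<bar>h\<bar> < 1 / Suc m \<and> P h"
  show "\<exists>\<^sub>F h in at (0::real). P h"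
    unfolding frequently_at
  proof (intro allI impI)
    fix d :: real assume "d > 0"
    then obtain m :: nat where m: "1 / Suc m < d"
      by (metis nat_approx_posE)
    then obtain h where "h \<noteq> 0" "\<bar>h\<bar> < 1 / Suc m" "P h" using R by blast
    then show "\<exists>x\<in>UNIV. x \<noteq> 0 \<and> dist x 0 < d \<and> P x" using m by (auto simp: dist_real_def)
  qed
qed

lemma open_dq_less:
  assumes cont: "continuous_on UNIV g" and h: "h \<noteq> 0"
  shows "open {x. dq g x h < p}" "open {x. dq g x h > p}"
proof -
  have c: "continuous_on UNIV (\<lambda>x. dq g x h)" unfolding dq_def
    by (intro continuous_intros continuous_on_compose2[OF cont]) (auto simp: h)
  show "open {x. dq g x h < p}" by (rule open_Collect_less[OF c continuous_on_const])
  show "open {x. dq g x h > p}" by (rule open_Collect_less[OF continuous_on_const c])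
qed

lemma Ebad_lmeasurable:
  assumes cont: "continuous_on UNIV g"
  shows "Ebad g p q n \<in> lmeasurable"
proof -
  define O1 where "O1 = (\<lambda>m::nat. \<Union>h\<in>{h. h \<noteq> 0 \<and> \<bar>h\<bar> < 1 / Suc m}. {x. dq g x h < p})"
  define O2 where "O2 = (\<lambda>m::nat. \<Union>h\<in>{h. h \<noteq> 0 \<and> \<bar>h\<bar> < 1 / Suc m}. {x. dq g x h > q})"
  have o1: "open (O1 m)" for m unfolding O1_def using open_dq_less(1)[OF cont] by auto
  have o2: "open (O2 m)" for m unfolding O2_def using open_dq_less(2)[OF cont] by auto
  have eq: "Ebad g p q n = (\<Inter>m. O1 m) \<inter> (\<Inter>m. O2 m) \<inter> ball 0 (real n)"
    unfolding Ebad_def O1_def O2_def frequently_at0_real by blast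
  have "(\<Inter>m. O1 m) \<in> sets borel" using o1 by (intro sets.countable_INT) auto
  moreover have "(\<Inter>m. O2 m) \<in> sets borel" using o2 by (intro sets.countable_INT) auto
  ultimately have "Ebad g p q n \<in> sets borel" unfolding eq by auto
  then have "Ebad g p q n \<in> sets lebesgue" using sets_completionI_sets[of _ lborel] by simp
  moreover have "bounded (Ebad g p q n)" unfolding Ebad_def by (meson Int_lower2 bounded_ball bounded_subset)
  ultimately show ?thesis by (simp add: bounded_set_imp_lmeasurable)
qed


lemma lip_cont:
  fixes g :: "real \<Rightarrow> real"
  assumes lip: "\<And>x y. \<bar>g x - g y\<bar> \<le> K * \<bar>x - y\<bar>"
  shows "continuous_on UNIV g"
proof -
  have "\<bar>g 1 - g 0\<bar> \<le> K" using lip[of 1 0] by simp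
  then have K0: "K \<ge> 0" by (meson abs_ge_zero order_trans)
  have "lipschitz_on K UNIV g" unfolding lipschitz_on_def using K0 lip by (simp add: dist_real_def)
  then show ?thesis by (rule lipschitz_on_continuous_on)
qed

lemma Ebad_negligible:
  fixes g :: "real \<Rightarrow> real"
  assumes smono: "\<And>x y. x < y \<Longrightarrow> g x < g y"
    and lip: "\<And>x y. \<bar>g x - g y\<bar> \<le> K * \<bar>x - y\<bar>"
    and pq: "0 \<le> p" "p < q"
  shows "negligible (Ebad g p q n)"
proof -
  have mono: "\<And>x y. x \<le> y \<Longrightarrow> g x \<le> g y" using smono by (metis order_le_less)
  have cont: "continuous_on UNIV g" by (rule lip_cont[OF lip])
  define E where "E = Ebad g p q n"
  have Em: "E \<in> lmeasurable" unfolding E_def by (rule Ebad_lmeasurable[OF cont])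
  have covA: "\<exists>a b. a \<le> x \<and> x \<le> b \<and> 0 < b - a \<and> b - a < d \<and> g b - g a \<le> p * (b - a)"
    if xE: "x \<in> E" and d0: "d > 0" for x d
  proof -
    have "\<exists>\<^sub>F h in at 0. dq g x h < p" using xE by (simp add: E_def Ebad_def)
    then obtain h where h: "h \<noteq> 0" "dist h 0 < d" "dq g x h < p"
      unfolding frequently_at using d0 by blast
    show ?thesis
    proof (cases "h > 0")
      case True
      then have "g (x + h) - g x < p * h" using h(3) by (simp add: dq_def divide_less_eq)
      then show ?thesis using True h(2) by (intro exI[of _ x] exI[of _ "x + h"]) (auto simp: dist_real_def)
    next
      case False
      then have hn: "h < 0" using h(1) by simp
      then have "g (x + h) - g x > p * h" using h(3) by (simp add: dq_def divide_less_eq)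
      then show ?thesis using hn h(2) by (intro exI[of _ "x + h"] exI[of _ x]) (auto simp: dist_real_def algebra_simps)
    qed
  qed
  have covB: "\<exists>a b. a \<le> x \<and> x \<le> b \<and> 0 < b - a \<and> b - a < d \<and> q * (b - a) \<le> g b - g a"
    if xE: "x \<in> E" and d0: "d > 0" for x d
  proof -
    have "\<exists>\<^sub>F h in at 0. dq g x h > q" using xE by (simp add: E_def Ebad_def)
    then obtain h where h: "h \<noteq> 0" "dist h 0 < d" "dq g x h > q"
      unfolding frequently_at using d0 by blast
    show ?thesis
    proof (cases "h > 0")
      case True
      then have "g (x + h) - g x > q * h" using h(3) by (simp add: dq_def less_divide_eq)
      then show ?thesis using True h(2) by (intro exI[of _ x] exI[of _ "x + h"]) (auto simp: dist_real_def)
    next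
      case False
      then have hn: "h < 0" using h(1) by simp
      then have "g (x + h) - g x < q * h" using h(3) by (simp add: dq_def less_divide_eq)
      then show ?thesis using hn h(2) by (intro exI[of _ "x + h"] exI[of _ x]) (auto simp: dist_real_def algebra_simps)
    qed
  qed
  define s where "s = measure lebesgue E"
  have key: "q * s \<le> p * (s + e) + e" if e: "e > 0" for e
  proof -
    obtain U where U: "open U" "E \<subseteq> U" "U \<in> lmeasurable" "measure lebesgue U \<le> measure lebesgue E + e"
      by (rule outer_open_measure[OF Em e])
    obtain T where T: "T \<in> lmeasurable" "g ` E \<subseteq> T" "measure lebesgue T \<le> p * measure lebesgue U"
      by (rule vitali_A[OF mono lip U(1,3,2) pq(1) covA])
    obtain V where V: "open V" "T \<subseteq> V" "V \<in> lmeasurable" "measure lebesgue V \<le> measure lebesgue T + e"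
      by (rule outer_open_measure[OF T(1) e])
    have qpos: "q > 0" using pq by simp
    have gEV: "g ` E \<subseteq> V" using T(2) V(2) by blast
    obtain T2 where T2: "T2 \<in> lmeasurable" "E \<subseteq> T2" "q * measure lebesgue T2 \<le> measure lebesgue V"
      by (rule vitali_B[OF smono cont V(1,3) gEV qpos covB])
    have "s \<le> measure lebesgue T2" unfolding s_def
      by (rule measure_mono_fmeasurable[OF T2(2)]) (use Em T2(1) in \<open>auto simp: fmeasurable_def\<close>)
    then have "q * s \<le> q * measure lebesgue T2" using qpos by simp
    also have "\<dots> \<le> measure lebesgue T + e" using T2 V by simp
    also have "\<dots> \<le> p * (s + e) + e"
    proof -
      have "p * measure lebesgue U \<le> p * (s + e)" using U(4) pq(1) unfolding s_def by (rule mult_left_mono)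
      then show ?thesis using T(3) by linarith
    qed
    finally show ?thesis .
  qed
  have s0: "s \<ge> 0" unfolding s_def by simp
  have "(q - p) * s \<le> 0"
  proof (rule field_le_epsilon)
    fix e :: real assume "e > 0"
    have "e / (p + 1) > 0" using \<open>e > 0\<close> pq by simp
    from key[OF this] have "q * s \<le> p * s + (p * (e / (p + 1)) + e / (p + 1))" by (simp add: algebra_simps)
    also have "p * (e / (p + 1)) + e / (p + 1) = (p + 1) * (e / (p + 1))" by (simp add: distrib_right add_divide_distrib)
    also have "(p + 1) * (e / (p + 1)) = e" using pq by simp
    finally show "(q - p) * s \<le> 0 + e" by (simp add: algebra_simps)
  qed
  then have "s = 0" using s0 pq by (smt (verit) mult_pos_pos)
  then show ?thesis using Em unfolding E_def s_def by (simp add: negligible_iff_measure0)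
qed


lemma strict_lip_diff_ae:
  fixes g :: "real \<Rightarrow> real"
  assumes smono: "\<And>x y. x < y \<Longrightarrow> g x < g y"
    and lip: "\<And>x y. \<bar>g x - g y\<bar> \<le> K * \<bar>x - y\<bar>"
  shows "negligible {x. \<not> g differentiable (at x)}"
proof -
  have "\<bar>g 1 - g 0\<bar> \<le> K" using lip[of 1 0] by simp
  then have K0: "K \<ge> 0" by (meson abs_ge_zero order_trans)
  define FF where "FF = (\<lambda>(p,q,n). if 0 \<le> p \<and> p < q then Ebad g p q n else {}) ` (\<rat> \<times> \<rat> \<times> (UNIV::nat set))"
  have cFF: "countable FF" unfolding FF_def
    by (intro countable_image countable_SIGMA countable_rat) auto
  have nFF: "negligible (\<Union>FF)"
  proof (rule negligible_countable_Union[OF cFF])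
    fix S assume "S \<in> FF"
    then obtain p q n where "S = (if 0 \<le> p \<and> p < q then Ebad g p q n else {})" unfolding FF_def by auto
    then show "negligible S" using Ebad_negligible[OF smono lip] by auto
  qed
  have sub: "{x. \<not> g differentiable (at x)} \<subseteq> \<Union>FF"
  proof (rule subsetI, rule ccontr)
    fix x assume x: "x \<in> {x. \<not> g differentiable (at x)}" and nx: "x \<notin> \<Union>FF"
    obtain n :: nat where n: "\<bar>x\<bar> < real n" using reals_Archimedean2 by blast
    have xb: "x \<in> ball 0 (real n)" using n by (simp add: dist_real_def)
    have notE: "\<not> ((\<exists>\<^sub>F h in at 0. dq g x h < p) \<and> (\<exists>\<^sub>F h in at 0. dq g x h > q))"
      if "p \<in> \<rat>" "q \<in> \<rat>" "0 \<le> p" "p < q" for p q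
    proof
      assume "(\<exists>\<^sub>F h in at 0. dq g x h < p) \<and> (\<exists>\<^sub>F h in at 0. dq g x h > q)"
      then have "x \<in> Ebad g p q n" using xb by (simp add: Ebad_def)
      moreover have "Ebad g p q n \<in> FF" unfolding FF_def using that
        by (intro image_eqI[of _ _ "(p,q,n)"]) auto
      ultimately show False using nx by blast
    qed
    have Qp: "0 < dq g x h" if h: "h \<noteq> 0" for h
    proof (cases "h > 0")
      case True
      then show ?thesis using smono[of x "x + h"] by (simp add: dq_def)
    next
      case False
      then have "h < 0" using h by simp
      then show ?thesis using smono[of "x + h" x] by (simp add: dq_def divide_neg_neg)
    qed
    have Qpos: "\<forall>\<^sub>F h in at 0. 0 < dq g x h"
      unfolding eventually_at_filter using Qp by (intro always_eventually) auto
    have Qle: "dq g x h \<le> K" for h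
    proof (cases "h = 0")
      case True then show ?thesis using K0 by (simp add: dq_def)
    next
      case False
      have "\<bar>g (x + h) - g x\<bar> \<le> K * \<bar>h\<bar>" using lip[of "x + h" x] by simp
      then have "\<bar>dq g x h\<bar> \<le> K" using False by (simp add: dq_def abs_divide divide_le_eq)
      then show ?thesis by simp
    qed
    define S where "S = {q \<in> \<rat>. \<forall>\<^sub>F h in at 0. dq g x h \<le> q}"
    define l where "l = Inf S"
    have Sne: "S \<noteq> {}"
    proof -
      have "of_int \<lceil>K\<rceil> \<in> S" unfolding S_def
      proof (intro CollectI conjI always_eventually allI)
        show "real_of_int \<lceil>K\<rceil> \<in> \<rat>" by simp
        fix h show "dq g x h \<le> real_of_int \<lceil>K\<rceil>" using Qle[of h] le_of_int_ceiling[of K] by linarith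
      qed
      then show ?thesis by blast
    qed
    have S0: "0 < q" if "q \<in> S" for q
    proof -
      have "\<forall>\<^sub>F h in at 0. 0 < dq g x h \<and> dq g x h \<le> q"
        using Qpos that unfolding S_def by (auto intro: eventually_conj)
      then have "\<forall>\<^sub>F h in at (0::real). 0 < q" by (rule eventually_mono) auto
      then show ?thesis using eventually_const[OF trivial_limit_at] by blast
    qed
    have bS: "bdd_below S" using S0 by (meson bdd_below.I less_imp_le)
    have "(dq g x \<longlongrightarrow> l) (at 0)"
    proof (rule order_tendstoI)
      fix a assume "l < a"
      then obtain q where q: "q \<in> S" "q < a" using cInf_lessD[OF Sne] l_def by blast
      then have "\<forall>\<^sub>F h in at 0. dq g x h \<le> q" by (simp add: S_def)
      then show "\<forall>\<^sub>F h in at 0. dq g x h < a" by (rule eventually_mono) (use q(2) in auto)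
    next
      fix a assume al: "a < l"
      show "\<forall>\<^sub>F h in at 0. a < dq g x h"
      proof (cases "a < 0")
        case True
        show ?thesis using Qpos by (rule eventually_mono) (use True in auto)
      next
        case False
        obtain p where p: "p \<in> \<rat>" "a < p" "p < l" using Rats_dense_in_real[OF al] by blast
        obtain q where q: "q \<in> \<rat>" "p < q" "q < l" using Rats_dense_in_real[OF p(3)] by blast
        have "q \<notin> S" using cInf_lower[OF _ bS, of q] q(3) l_def by force
        then have "\<exists>\<^sub>F h in at 0. dq g x h > q" using q(1) by (simp add: S_def not_eventually not_le)
        then have "\<not> (\<exists>\<^sub>F h in at 0. dq g x h < p)" using notE[OF p(1) q(1) _ q(2)] False p(2) by auto
        then have "\<forall>\<^sub>F h in at 0. p \<le> dq g x h" by (simp add: not_frequently not_less)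
        then show ?thesis by (rule eventually_mono) (use p(2) in auto)
      qed
    qed
    then have "(g has_real_derivative l) (at x)" unfolding DERIV_def dq_def .
    then have "g differentiable (at x)" using real_differentiable_def by blast
    then show False using x by simp
  qed
  show ?thesis by (rule negligible_subset[OF nFF sub])
qed


lemma mono_lip_diff_ae:
  fixes f :: "real \<Rightarrow> real"
  assumes mono: "\<And>x y. x \<le> y \<Longrightarrow> f x \<le> f y"
    and lip: "\<And>x y. \<bar>f x - f y\<bar> \<le> L * \<bar>x - y\<bar>"
  shows "negligible {x. \<not> f differentiable (at x)}"
proof -
  define g where "g = (\<lambda>x. f x + x)"
  have smono: "g x < g y" if "x < y" for x y using mono[of x y] that by (simp add: g_def)
  have lipg: "\<bar>g x - g y\<bar> \<le> (L + 1) * \<bar>x - y\<bar>" for x y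
  proof -
    have "\<bar>g x - g y\<bar> \<le> \<bar>f x - f y\<bar> + \<bar>x - y\<bar>" by (simp add: g_def)
    then show ?thesis using lip[of x y] by (simp add: distrib_right)
  qed
  have "{x. \<not> f differentiable (at x)} \<subseteq> {x. \<not> g differentiable (at x)}"
  proof
    fix x assume "x \<in> {x. \<not> f differentiable (at x)}"
    then have nf: "\<not> f differentiable (at x)" by simp
    show "x \<in> {x. \<not> g differentiable (at x)}"
    proof (rule CollectI, rule notI)
      assume "g differentiable (at x)"
      then obtain D where "(g has_real_derivative D) (at x)" using real_differentiable_def by blast
      then have "((\<lambda>x. g x - x) has_real_derivative D - 1) (at x)" by (auto intro!: derivative_eq_intros)
      then have "(f has_real_derivative D - 1) (at x)" by (simp add: g_def)
      then show False using nf real_differentiable_def by blast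
    qed
  qed
  then show ?thesis using strict_lip_diff_ae[OF smono lipg] negligible_subset by blast
qed

lemma mono_lip_deriv_bounds:
  fixes f :: "real \<Rightarrow> real"
  assumes mono: "\<And>x y. x \<le> y \<Longrightarrow> f x \<le> f y"
    and lip: "\<And>x y. \<bar>f x - f y\<bar> \<le> L * \<bar>x - y\<bar>"
    and d: "f differentiable (at x)"
  shows "0 \<le> deriv f x" "deriv f x \<le> L"
proof -
  have "(f has_real_derivative deriv f x) (at x)" using d DERIV_deriv_iff_real_differentiable by blast
  then have lim: "(dq f x \<longlongrightarrow> deriv f x) (at 0)" unfolding DERIV_def dq_def .
  have "\<bar>f 1 - f 0\<bar> \<le> L" using lip[of 1 0] by simp
  then have L0: "L \<ge> 0" by (meson abs_ge_zero order_trans)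
  have lo: "0 \<le> dq f x h" for h
  proof (cases "h \<ge> 0")
    case True then show ?thesis using mono[of x "x+h"] by (simp add: dq_def)
  next
    case False then show ?thesis using mono[of "x+h" x] by (simp add: dq_def divide_nonpos_neg)
  qed
  have up: "dq f x h \<le> L" for h
  proof (cases "h = 0")
    case True then show ?thesis using L0 by (simp add: dq_def)
  next
    case False
    have "\<bar>f (x + h) - f x\<bar> \<le> L * \<bar>h\<bar>" using lip[of "x + h" x] by simp
    then have "\<bar>dq f x h\<bar> \<le> L" using False by (simp add: dq_def abs_divide divide_le_eq)
    then show ?thesis by simp
  qed
  show "0 \<le> deriv f x" by (rule tendsto_lowerbound[OF lim _ trivial_limit_at]) (use lo in \<open>auto intro: always_eventually\<close>)
  show "deriv f x \<le> L" by (rule tendsto_upperbound[OF lim _ trivial_limit_at]) (use up in \<open>auto intro: always_eventually\<close>)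
qed

lemma avg_limit:
  fixes f :: "real \<Rightarrow> real"
  assumes mono: "\<And>x y. x \<le> y \<Longrightarrow> f x \<le> f y"
    and cont: "continuous_on UNIV f"
  shows "(\<lambda>k. integral {c..c + inverse (real (Suc k))} f / inverse (real (Suc k))) \<longlonglongrightarrow> f c"
proof (rule real_tendsto_sandwich[of "\<lambda>k. f c" _ _ "\<lambda>k. f (c + inverse (real (Suc k)))"])
  define \<delta> where "\<delta> = (\<lambda>k. inverse (real (Suc k)))"
  have dpos: "\<delta> k > 0" for k by (simp add: \<delta>_def)
  have int: "f integrable_on {c..c + \<delta> k}" for k
    by (rule integrable_continuous_real) (rule continuous_on_subset[OF cont], simp)
  have lo: "f c * \<delta> k \<le> integral {c..c + \<delta> k} f" for k
  proof -
    have "integral {c..c + \<delta> k} (\<lambda>x. f c) \<le> integral {c..c + \<delta> k} f"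
      by (rule integral_le) (auto intro: int mono)
    then show ?thesis using dpos[of k] by (simp add: integral_const_real mult.commute)
  qed
  have hi: "integral {c..c + \<delta> k} f \<le> f (c + \<delta> k) * \<delta> k" for k
  proof -
    have "integral {c..c + \<delta> k} f \<le> integral {c..c + \<delta> k} (\<lambda>x. f (c + \<delta> k))"
      by (rule integral_le) (auto intro: int mono)
    then show ?thesis using dpos[of k] by (simp add: integral_const_real mult.commute)
  qed
  show "\<forall>\<^sub>F k in sequentially. f c \<le> integral {c..c + inverse (real (Suc k))} f / inverse (real (Suc k))"
    using lo dpos by (intro always_eventually allI) (simp add: \<delta>_def pos_le_divide_eq)
  show "\<forall>\<^sub>F k in sequentially. integral {c..c + inverse (real (Suc k))} f / inverse (real (Suc k)) \<le> f (c + inverse (real (Suc k)))"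
    using hi dpos by (intro always_eventually allI) (simp add: \<delta>_def pos_divide_le_eq)
  show "(\<lambda>k. f c) \<longlonglongrightarrow> f c" by simp
  have "isCont f c" using cont by (simp add: continuous_on_eq_continuous_at)
  then show "(\<lambda>k. f (c + inverse (real (Suc k)))) \<longlonglongrightarrow> f c"
    using isCont_tendsto_compose[OF _ LIMSEQ_inverse_real_of_nat_add[of c]] by blast
qed


lemma mono_lip_FTC:
  fixes f :: "real \<Rightarrow> real"
  assumes mono: "\<And>x y. x \<le> y \<Longrightarrow> f x \<le> f y"
    and lip: "\<And>x y. \<bar>f x - f y\<bar> \<le> L * \<bar>x - y\<bar>"
    and ab: "a \<le> b"
  shows "(deriv f has_integral (f b - f a)) {a..b}"
proof -
  have cont: "continuous_on UNIV f" by (rule lip_cont[OF lip])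
  define N where "N = {x. \<not> f differentiable (at x)}"
  have nN: "negligible N" unfolding N_def by (rule mono_lip_diff_ae[OF mono lip])
  define S where "S = {a..b} - N"
  have spk: "negligible {x \<in> {a..b} - S. h x \<noteq> 0}" "negligible {x \<in> S - {a..b}. h x \<noteq> 0}" for h :: "real \<Rightarrow> real"
    by (auto simp: S_def intro: negligible_subset[OF nN])
  define \<delta> where "\<delta> = (\<lambda>k. inverse (real (Suc k)))"
  have dpos: "\<delta> k > 0" for k by (simp add: \<delta>_def)
  define fk where "fk = (\<lambda>k x. dq f x (\<delta> k))"
  have fk_cont: "continuous_on {a..b} (fk k)" for k unfolding fk_def dq_def
    by (intro continuous_intros continuous_on_compose2[OF cont]) (auto simp: dpos less_imp_neq[OF dpos, symmetric])
  have fk_int: "fk k integrable_on {a..b}" for k by (rule integrable_continuous_real[OF fk_cont])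
  have fk_intS: "fk k integrable_on S" for k using integrable_spike_set[OF fk_int spk] .
  have L_intS: "(\<lambda>x. L) integrable_on S" using integrable_spike_set[OF integrable_const_ivl spk] .
  have fk_bnd: "norm (fk k x) \<le> L" for k x
  proof -
    have "\<bar>f (x + \<delta> k) - f x\<bar> \<le> L * \<delta> k" using lip[of "x + \<delta> k" x] dpos[of k] by simp
    then show ?thesis using dpos[of k] by (simp add: fk_def dq_def abs_divide divide_le_eq)
  qed
  have fk_conv: "(\<lambda>k. fk k x) \<longlonglongrightarrow> deriv f x" if "x \<in> S" for x
  proof -
    have "f differentiable (at x)" using that by (simp add: S_def N_def)
    then have "(f has_real_derivative deriv f x) (at x)" using DERIV_deriv_iff_real_differentiable by blast
    then have lim: "(dq f x \<longlongrightarrow> deriv f x) (at 0)" unfolding DERIV_def dq_def .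
    have "filterlim \<delta> (at 0) sequentially"
      unfolding filterlim_at using LIMSEQ_inverse_real_of_nat dpos by (auto simp: \<delta>_def less_imp_neq[symmetric])
    from filterlim_compose[OF lim this] show ?thesis by (simp add: fk_def)
  qed
  have dc: "deriv f integrable_on S" "(\<lambda>k. integral S (fk k)) \<longlonglongrightarrow> integral S (deriv f)"
    using dominated_convergence[OF fk_intS L_intS fk_bnd fk_conv] by auto
  have fint: "f integrable_on {u..v}" for u v by (rule integrable_continuous_real) (rule continuous_on_subset[OF cont], simp)
  have eqk: "integral S (fk k) = integral {b..b + \<delta> k} f / \<delta> k - integral {a..a + \<delta> k} f / \<delta> k" for k
  proof -
    have "integral S (fk k) = integral {a..b} (fk k)" using integral_spike_set[OF spk] by metis
    also have "\<dots> = integral {a..b} (\<lambda>x. (f (x + \<delta> k) - f x) / \<delta> k)" by (simp add: fk_def dq_def)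
    also have "\<dots> = (integral {a..b} (\<lambda>x. f (x + \<delta> k)) - integral {a..b} f) / \<delta> k"
    proof -
      have i1: "(\<lambda>x. f (x + \<delta> k)) integrable_on {a..b}"
        by (rule integrable_continuous_real) (intro continuous_intros continuous_on_compose2[OF cont], auto)
      show ?thesis using integral_diff[OF i1 fint[of a b]] integral_divide[of "{a..b}" "\<lambda>x. f (x + \<delta> k) - f x" "\<delta> k"]
        by simp
    qed
    also have "integral {a..b} (\<lambda>x. f (x + \<delta> k)) = integral {a + \<delta> k..b + \<delta> k} f"
    proof -
      have "(\<lambda>x. f (x + \<delta> k)) = f \<circ> (+) (\<delta> k)" by (auto simp: add.commute)
      then show ?thesis using integral_shift_Icc_real[of a b f "\<delta> k"] by simp
    qed
    also have "integral {a + \<delta> k..b + \<delta> k} f - integral {a..b} f = integral {b..b + \<delta> k} f - integral {a..a + \<delta> k} f"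
    proof -
      have "integral {a..a + \<delta> k} f + integral {a + \<delta> k..b + \<delta> k} f = integral {a..b + \<delta> k} f"
        using Henstock_Kurzweil_Integration.integral_combine[where a=a and c="a + \<delta> k" and b="b + \<delta> k" and f=f] dpos[of k] ab fint by simp
      moreover have "integral {a..b} f + integral {b..b + \<delta> k} f = integral {a..b + \<delta> k} f"
        using Henstock_Kurzweil_Integration.integral_combine[where a=a and c=b and b="b + \<delta> k" and f=f] dpos[of k] ab fint by simp
      ultimately show ?thesis by linarith
    qed
    finally show ?thesis by (simp add: diff_divide_distrib)
  qed
  have "(\<lambda>k. integral S (fk k)) \<longlonglongrightarrow> f b - f a"
    unfolding eqk \<delta>_def by (intro tendsto_diff avg_limit[OF mono cont])
  then have "integral S (deriv f) = f b - f a" using dc(2) LIMSEQ_unique by blast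
  then have "(deriv f has_integral (f b - f a)) S" using dc(1) by (metis has_integral_integral)
  then show ?thesis using has_integral_spike_set_eq[OF spk] by blast
qed


definition clamp :: "real \<Rightarrow> real" where "clamp s = max 0 (min 1 s)"

lemma clamp_in: "clamp s \<in> {0..1}" by (simp add: clamp_def)
lemma clamp_id: "s \<in> {0..1} \<Longrightarrow> clamp s = s" by (simp add: clamp_def)
lemma clamp_mono: "s \<le> s' \<Longrightarrow> clamp s \<le> clamp s'" by (simp add: clamp_def)
lemma clamp_lip: "\<bar>clamp a - clamp b\<bar> \<le> \<bar>a - b\<bar>" by (simp add: clamp_def abs_if max_def min_def)

lemma cop_bounds:
  assumes C: "is_copula D" and x: "x \<in> {0..1}" and s: "0 \<le> s1" "s1 \<le> s2" "s2 \<le> 1"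
  shows "0 \<le> D x s2 - D x s1" "D x s2 - D x s1 \<le> s2 - s1"
proof -
  have b: "\<And>u. u \<in> {0..1} \<Longrightarrow> D u 0 = 0 \<and> D 0 u = 0 \<and> D u 1 = u \<and> D 1 u = u"
   and inc: "\<And>u1 u2 v1 v2. 0 \<le> u1 \<Longrightarrow> u1 \<le> u2 \<Longrightarrow> u2 \<le> 1 \<Longrightarrow> 0 \<le> v1 \<Longrightarrow> v1 \<le> v2 \<Longrightarrow> v2 \<le> 1 \<Longrightarrow>
        D u2 v2 - D u2 v1 - D u1 v2 + D u1 v1 \<ge> 0"
    using C unfolding is_copula_def by blast+
  have "D x s2 - D x s1 - D 0 s2 + D 0 s1 \<ge> 0" using inc[of 0 x s1 s2] x s by auto
  then show "0 \<le> D x s2 - D x s1" using b[of s1] b[of s2] s by auto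
  have "D 1 s2 - D 1 s1 - D x s2 + D x s1 \<ge> 0" using inc[of x 1 s1 s2] x s by auto
  then show "D x s2 - D x s1 \<le> s2 - s1" using b[of s1] b[of s2] s by auto
qed

lemma cop_transpose: "is_copula D \<Longrightarrow> is_copula (\<lambda>a b. D b a)"
  unfolding is_copula_def
proof (elim conjE, intro conjI allI impI)
  fix u1 u2 v1 v2 :: real
  assume inc: "\<forall>u1 u2 v1 v2. 0 \<le> u1 \<and> u1 \<le> u2 \<and> u2 \<le> 1 \<and> 0 \<le> v1 \<and> v1 \<le> v2 \<and> v2 \<le> 1 \<longrightarrow> 0 \<le> D u2 v2 - D u2 v1 - D u1 v2 + D u1 v1"
    and h: "0 \<le> u1 \<and> u1 \<le> u2 \<and> u2 \<le> 1 \<and> 0 \<le> v1 \<and> v1 \<le> v2 \<and> v2 \<le> 1"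
  then have "0 \<le> D v2 u2 - D v2 u1 - D v1 u2 + D v1 u1" by blast
  then show "0 \<le> D v2 u2 - D v1 u2 - D v2 u1 + D v1 u1" by linarith
qed auto

lemma cop_sec_props:
  assumes C: "is_copula D" and x: "x \<in> {0..1}"
  shows "\<And>a b. a \<le> b \<Longrightarrow> D x (clamp a) \<le> D x (clamp b)"
    "\<And>a b. \<bar>D x (clamp a) - D x (clamp b)\<bar> \<le> 1 * \<bar>a - b\<bar>"
proof -
  fix a b :: real
  show "a \<le> b \<Longrightarrow> D x (clamp a) \<le> D x (clamp b)"
    using cop_bounds(1)[OF C x, of "clamp a" "clamp b"] clamp_in[of a] clamp_in[of b] clamp_mono[of a b] by auto
  have "\<bar>D x (clamp a) - D x (clamp b)\<bar> \<le> \<bar>clamp a - clamp b\<bar>"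
  proof (cases "clamp a \<le> clamp b")
    case True then show ?thesis
      using cop_bounds[OF C x, of "clamp a" "clamp b"] clamp_in[of a] clamp_in[of b] by auto
  next
    case False then show ?thesis
      using cop_bounds[OF C x, of "clamp b" "clamp a"] clamp_in[of a] clamp_in[of b] by auto
  qed
  then show "\<bar>D x (clamp a) - D x (clamp b)\<bar> \<le> 1 * \<bar>a - b\<bar>" using clamp_lip[of a b] by simp
qed

lemma local_eq_nhds:
  assumes "t \<in> {0<..<1::real}" "\<And>s. s \<in> {0..1} \<Longrightarrow> f s = g s"
  shows "eventually (\<lambda>s. f s = g s) (nhds t)"
proof -
  have "eventually (\<lambda>s. s \<in> {0<..<1::real}) (nhds t)" using assms(1) by (intro eventually_nhds_in_open) auto
  then show ?thesis by (rule eventually_mono) (use assms(2) in auto)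
qed

lemma cop_R:
  assumes C: "is_copula D" and x: "x \<in> {0..1}"
  obtains N where "negligible N"
    "\<And>t. t \<in> {0<..<1} - N \<Longrightarrow> ((\<lambda>s. D x s) has_real_derivative deriv (\<lambda>s. D x s) t) (at t)"
    "\<And>t. t \<in> {0<..<1} - N \<Longrightarrow> 0 \<le> deriv (\<lambda>s. D x s) t \<and> deriv (\<lambda>s. D x s) t \<le> 1"
proof -
  define f where "f = (\<lambda>s. D x (clamp s))"
  have mono: "\<And>a b. a \<le> b \<Longrightarrow> f a \<le> f b" and lip: "\<And>a b. \<bar>f a - f b\<bar> \<le> 1 * \<bar>a - b\<bar>"
    using cop_sec_props[OF C x] by (auto simp: f_def)
  define N where "N = {t. \<not> f differentiable (at t)}"
  have nN: "negligible N" unfolding N_def by (rule mono_lip_diff_ae[OF mono lip])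
  have eqf: "\<And>s. s \<in> {0..1} \<Longrightarrow> D x s = f s" by (simp add: f_def clamp_id)
  show ?thesis
  proof (rule that[OF nN])
    fix t assume t: "t \<in> {0<..<1} - N"
    have ev: "eventually (\<lambda>s. D x s = f s) (nhds t)" using t eqf by (intro local_eq_nhds) auto
    have dd: "deriv (\<lambda>s. D x s) t = deriv f t" by (rule deriv_cong_ev[OF ev refl])
    have fd: "f differentiable (at t)" using t by (simp add: N_def)
    then have "(f has_real_derivative deriv f t) (at t)" using DERIV_deriv_iff_real_differentiable by blast
    then show "((\<lambda>s. D x s) has_real_derivative deriv (\<lambda>s. D x s) t) (at t)"
      using DERIV_cong_ev[OF refl ev, of "deriv f t" "deriv f t"] dd by simp
    show "0 \<le> deriv (\<lambda>s. D x s) t \<and> deriv (\<lambda>s. D x s) t \<le> 1"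
      using mono_lip_deriv_bounds[OF mono lip fd] dd by simp
  qed
qed

lemma cop_R_int:
  assumes C: "is_copula D" and x: "x \<in> {0..1}" and v: "v \<in> {0..1}"
  shows "(deriv (\<lambda>s. D x s) has_integral D x v) {0..v}"
proof -
  define f where "f = (\<lambda>s. D x (clamp s))"
  have mono: "\<And>a b. a \<le> b \<Longrightarrow> f a \<le> f b" and lip: "\<And>a b. \<bar>f a - f b\<bar> \<le> 1 * \<bar>a - b\<bar>"
    using cop_sec_props[OF C x] by (auto simp: f_def)
  have eqf: "\<And>s. s \<in> {0..1} \<Longrightarrow> D x s = f s" by (simp add: f_def clamp_id)
  have "(deriv f has_integral (f v - f 0)) {0..v}" using v by (intro mono_lip_FTC[OF mono lip]) auto
  moreover have "f v - f 0 = D x v" using eqf[of v] eqf[of 0] v C x by (auto simp: is_copula_def)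
  moreover have "deriv f t = deriv (\<lambda>s. D x s) t" if "t \<in> {0..v} - {0,v}" for t
  proof -
    have "t \<in> {0<..<1}" using that v by auto
    then have "eventually (\<lambda>s. f s = D x s) (nhds t)" using eqf by (intro local_eq_nhds) auto
    then show ?thesis by (rule deriv_cong_ev) simp
  qed
  ultimately show ?thesis
    using has_integral_spike[of "{0,v}" "{0..v}" "deriv (\<lambda>s. D x s)" "deriv f"] by auto
qed

lemma cop_L:
  assumes C: "is_copula D" and y: "y \<in> {0..1}"
  obtains N where "negligible N"
    "\<And>t. t \<in> {0<..<1} - N \<Longrightarrow> ((\<lambda>s. D s y) has_real_derivative deriv (\<lambda>s. D s y) t) (at t)"
    "\<And>t. t \<in> {0<..<1} - N \<Longrightarrow> 0 \<le> deriv (\<lambda>s. D s y) t \<and> deriv (\<lambda>s. D s y) t \<le> 1"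
  using cop_R[OF cop_transpose[OF C] y] by blast

lemma cop_L_int:
  assumes C: "is_copula D" and y: "y \<in> {0..1}" and v: "v \<in> {0..1}"
  shows "(deriv (\<lambda>s. D s y) has_integral D v y) {0..v}"
  using cop_R_int[OF cop_transpose[OF C] y v] by simp


lemma prod_int01:
  fixes \<phi> \<psi> :: "real \<Rightarrow> real"
  assumes i1: "\<phi> integrable_on {0..1}" and i2: "\<psi> integrable_on {0..1}" and N: "negligible N"
    and b: "\<And>t. t \<in> {0..1} - N \<Longrightarrow> 0 \<le> \<phi> t \<and> \<phi> t \<le> 1 \<and> 0 \<le> \<psi> t \<and> \<psi> t \<le> 1"
  shows "(\<lambda>t. \<phi> t * \<psi> t) integrable_on {0..1}"
proof -
  define S where "S = {0..1::real} - N"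
  have spk: "negligible {x \<in> {0..1} - S. h x \<noteq> 0}" "negligible {x \<in> S - {0..1}. h x \<noteq> 0}" for h :: "real \<Rightarrow> real"
    by (auto simp: S_def intro: negligible_subset[OF N])
  have Sm: "S \<in> sets lebesgue" unfolding S_def using N by (intro sets.Diff) (auto simp: negligible_imp_sets)
  have i1S: "\<phi> integrable_on S" using integrable_spike_set[OF i1 spk] .
  have i2S: "\<psi> integrable_on S" using integrable_spike_set[OF i2 spk] .
  have m1: "\<phi> \<in> borel_measurable (lebesgue_on S)" by (rule integrable_imp_measurable[OF i1S])
  have bd: "bounded (\<phi> ` S)"
  proof -
    have "\<phi> ` S \<subseteq> {0..1}" using b by (auto simp: S_def)
    then show ?thesis by (meson bounded_closed_interval bounded_subset)
  qed
  have a2: "\<psi> absolutely_integrable_on S" using b by (intro nonnegative_absolutely_integrable_1[OF i2S]) (auto simp: S_def)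
  have "(\<lambda>t. \<phi> t * \<psi> t) absolutely_integrable_on S"
    by (rule absolutely_integrable_bounded_measurable_product_real[OF m1 Sm bd a2])
  then have "(\<lambda>t. \<phi> t * \<psi> t) integrable_on S" using absolutely_integrable_on_def by blast
  then show ?thesis using integrable_spike_set[OF _ spk(2) spk(1)] by blast
qed

lemma cop_R_ae:
  assumes C: "is_copula D" and x: "x \<in> {0..1}"
  shows "\<exists>N. negligible N \<and> (\<forall>t\<in>{0..1} - N. ((\<lambda>s. D x s) has_real_derivative deriv (\<lambda>s. D x s) t) (at t)
     \<and> 0 \<le> deriv (\<lambda>s. D x s) t \<and> deriv (\<lambda>s. D x s) t \<le> 1)"
proof -
  obtain N where N: "negligible N"
    "\<And>t. t \<in> {0<..<1} - N \<Longrightarrow> ((\<lambda>s. D x s) has_real_derivative deriv (\<lambda>s. D x s) t) (at t)"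
    "\<And>t. t \<in> {0<..<1} - N \<Longrightarrow> 0 \<le> deriv (\<lambda>s. D x s) t \<and> deriv (\<lambda>s. D x s) t \<le> 1"
    using cop_R[OF C x] by blast
  show ?thesis
    by (rule exI[of _ "N \<union> {0,1}"]) (use N in auto)
qed

lemma cop_L_ae:
  assumes C: "is_copula D" and y: "y \<in> {0..1}"
  shows "\<exists>N. negligible N \<and> (\<forall>t\<in>{0..1} - N. ((\<lambda>s. D s y) has_real_derivative deriv (\<lambda>s. D s y) t) (at t)
     \<and> 0 \<le> deriv (\<lambda>s. D s y) t \<and> deriv (\<lambda>s. D s y) t \<le> 1)"
  using cop_R_ae[OF cop_transpose[OF C] y] by simp

lemma fp_int:
  assumes D: "is_copula D" and E: "is_copula E" and x: "x \<in> {0..1}" and y: "y \<in> {0..1}"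
  shows "(\<lambda>t. deriv (\<lambda>s. D x s) t * deriv (\<lambda>s. E s y) t) integrable_on {0..1}"
proof -
  obtain N1 where N1: "negligible N1" "\<forall>t\<in>{0..1} - N1. 0 \<le> deriv (\<lambda>s. D x s) t \<and> deriv (\<lambda>s. D x s) t \<le> 1"
    using cop_R_ae[OF D x] by blast
  obtain N2 where N2: "negligible N2" "\<forall>t\<in>{0..1} - N2. 0 \<le> deriv (\<lambda>s. E s y) t \<and> deriv (\<lambda>s. E s y) t \<le> 1"
    using cop_L_ae[OF E y] by blast
  have i1: "deriv (\<lambda>s. D x s) integrable_on {0..1}" using cop_R_int[OF D x, of 1] by auto
  have i2: "deriv (\<lambda>s. E s y) integrable_on {0..1}" using cop_L_int[OF E y, of 1] by auto
  show ?thesis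
    by (rule prod_int01[OF i1 i2 negligible_Un[OF N1(1) N2(1)]]) (use N1 N2 in auto)
qed

lemma deriv_min_right:
  fixes y t :: real
  assumes "t \<noteq> y"
  shows "deriv (\<lambda>s. copM s y) t = (if t < y then 1 else 0)"
proof (cases "t < y")
  case True
  have "eventually (\<lambda>s. s \<in> {..<y}) (nhds t)" using True by (intro eventually_nhds_in_open) auto
  then have ev: "eventually (\<lambda>s. copM s y = s) (nhds t)" by (rule eventually_mono) (auto simp: copM_def)
  have "deriv (\<lambda>s. copM s y) t = deriv (\<lambda>s. s) t" by (rule deriv_cong_ev[OF ev refl])
  then show ?thesis using True by simp
next
  case False
  then have ty: "t > y" using assms by simp
  have "eventually (\<lambda>s. s \<in> {y<..}) (nhds t)" using ty by (intro eventually_nhds_in_open) auto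
  then have ev: "eventually (\<lambda>s. copM s y = y) (nhds t)" by (rule eventually_mono) (auto simp: copM_def)
  have "deriv (\<lambda>s. copM s y) t = deriv (\<lambda>s. y) t" by (rule deriv_cong_ev[OF ev refl])
  then show ?thesis using ty by simp
qed

lemma deriv_min_left:
  fixes x t :: real
  assumes "t \<noteq> x"
  shows "deriv (\<lambda>s. copM x s) t = (if t < x then 1 else 0)"
proof -
  have "(\<lambda>s. copM x s) = (\<lambda>s. copM s x)" by (auto simp: copM_def)
  then show ?thesis using deriv_min_right[OF assms] by simp
qed

lemma restrict_int:
  fixes h :: "real \<Rightarrow> real"
  assumes "(h has_integral i) {0..y}" "y \<in> {0..1}" and g: "\<And>t. t \<in> {0..1} - {y} \<Longrightarrow> g t = (if t < y then h t else 0)"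
  shows "(g has_integral i) {0..1}"
proof -
  have "((\<lambda>t. if t \<in> cbox 0 y then h t else 0) has_integral i) (cbox 0 1)"
    by (rule has_integral_restrict_closed_subinterval) (use assms in auto)
  then have *: "((\<lambda>t. if t \<in> {0..y} then h t else 0) has_integral i) {0..1}" by simp
  show ?thesis
  proof (rule has_integral_spike[OF _ _ *])
    show "negligible {y}" by simp
    show "g t = (if t \<in> {0..y} then h t else 0)" if "t \<in> {0..1} - {y}" for t
      using g[OF that] that by auto
  qed
qed

lemma fp_M_right:
  assumes D: "is_copula D" and x: "x \<in> {0..1}" and y: "y \<in> {0..1}"
  shows "fold_prod D copM x y = D x y"
proof -
  have "((\<lambda>t. deriv (\<lambda>s. D x s) t * deriv (\<lambda>s. copM s y) t) has_integral D x y) {0..1}"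
    by (rule restrict_int[OF cop_R_int[OF D x y] y]) (auto simp: deriv_min_right)
  then show ?thesis unfolding fold_prod_def by (rule integral_unique)
qed

lemma fp_M_left:
  assumes D: "is_copula D" and x: "x \<in> {0..1}" and y: "y \<in> {0..1}"
  shows "fold_prod copM D x y = D x y"
proof -
  have "((\<lambda>t. deriv (\<lambda>s. copM x s) t * deriv (\<lambda>s. D s y) t) has_integral D x y) {0..1}"
    by (rule restrict_int[OF cop_L_int[OF D y x] x]) (auto simp: deriv_min_left)
  then show ?thesis unfolding fold_prod_def by (rule integral_unique)
qed

lemma fp_Pi_right:
  assumes D: "is_copula D" and x: "x \<in> {0..1}" and y: "y \<in> {0..1}"
  shows "fold_prod D copPi x y = copPi x y"
proof -
  have dp: "deriv (\<lambda>s. s * y) t = y" for t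
  proof -
    have "((\<lambda>s. s * y) has_real_derivative y) (at t)" by (auto intro!: derivative_eq_intros)
    then show ?thesis by (rule DERIV_imp_deriv)
  qed
  have "(deriv (\<lambda>s. D x s) has_integral D x 1) {0..1}" using cop_R_int[OF D x, of 1] by simp
  then have "((\<lambda>t. deriv (\<lambda>s. D x s) t * y) has_integral D x 1 * y) {0..1}" by (rule has_integral_mult_left)
  moreover have "D x 1 = x" using D x by (auto simp: is_copula_def)
  ultimately have "((\<lambda>t. deriv (\<lambda>s. D x s) t * y) has_integral x * y) {0..1}" by simp
  then show ?thesis unfolding fold_prod_def copPi_def dp by (rule integral_unique)
qed

lemma fp_Pi_left:
  assumes D: "is_copula D" and x: "x \<in> {0..1}" and y: "y \<in> {0..1}"
  shows "fold_prod copPi D x y = copPi x y"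
proof -
  have dp: "deriv (\<lambda>s. x * s) t = x" for t
  proof -
    have "((\<lambda>s. x * s) has_real_derivative x) (at t)" by (auto intro!: derivative_eq_intros)
    then show ?thesis by (rule DERIV_imp_deriv)
  qed
  have "(deriv (\<lambda>s. D s y) has_integral D 1 y) {0..1}" using cop_L_int[OF D y, of 1] by simp
  then have "((\<lambda>t. x * deriv (\<lambda>s. D s y) t) has_integral x * D 1 y) {0..1}" by (rule has_integral_mult_right)
  moreover have "D 1 y = y" using D y by (auto simp: is_copula_def)
  ultimately have "((\<lambda>t. x * deriv (\<lambda>s. D s y) t) has_integral x * y) {0..1}" by simp
  then show ?thesis unfolding fold_prod_def copPi_def dp by (rule integral_unique)
qed


lemma fp_lin_right:
  assumes D: "is_copula D" and E: "\<And>k. k \<in> K \<Longrightarrow> is_copula (E k)" and K: "finite K"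
    and x: "x \<in> {0..1}" and y: "y \<in> {0..1}"
  shows "fold_prod D (\<lambda>a b. \<Sum>k\<in>K. c k * E k a b) x y = (\<Sum>k\<in>K. c k * fold_prod D (E k) x y)"
proof -
  have ex: "\<forall>k\<in>K. \<exists>N. negligible N \<and> (\<forall>t\<in>{0..1} - N. ((\<lambda>s. E k s y) has_real_derivative deriv (\<lambda>s. E k s y) t) (at t))"
  proof
    fix k assume "k \<in> K"
    from cop_L_ae[OF E[OF this] y] obtain N where N: "negligible N"
      "\<forall>t\<in>{0..1} - N. ((\<lambda>s. E k s y) has_real_derivative deriv (\<lambda>s. E k s y) t) (at t) \<and> 0 \<le> deriv (\<lambda>s. E k s y) t \<and> deriv (\<lambda>s. E k s y) t \<le> 1"
      by (elim exE conjE)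
    show "\<exists>N. negligible N \<and> (\<forall>t\<in>{0..1} - N. ((\<lambda>s. E k s y) has_real_derivative deriv (\<lambda>s. E k s y) t) (at t))"
      using N by (intro exI[of _ N]) simp
  qed
  obtain NN where NN: "\<forall>k\<in>K. negligible (NN k) \<and> (\<forall>t\<in>{0..1} - NN k. ((\<lambda>s. E k s y) has_real_derivative deriv (\<lambda>s. E k s y) t) (at t))"
    using bchoice[OF ex] by blast
  define N where "N = \<Union>(NN ` K)"
  have nN: "negligible N" unfolding N_def using NN K by (intro negligible_Union) auto
  have dsum: "deriv (\<lambda>s. \<Sum>k\<in>K. c k * E k s y) t = (\<Sum>k\<in>K. c k * deriv (\<lambda>s. E k s y) t)" if t: "t \<in> {0..1} - N" for t
  proof -
    have "((\<lambda>s. \<Sum>k\<in>K. c k * E k s y) has_real_derivative (\<Sum>k\<in>K. c k * deriv (\<lambda>s. E k s y) t)) (at t)"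
    proof (rule DERIV_sum)
      fix k assume "k \<in> K"
      then have "((\<lambda>s. E k s y) has_real_derivative deriv (\<lambda>s. E k s y) t) (at t)" using NN t by (auto simp: N_def)
      then show "((\<lambda>s. c k * E k s y) has_real_derivative c k * deriv (\<lambda>s. E k s y) t) (at t)"
        by (rule DERIV_cmult)
    qed
    then show ?thesis by (rule DERIV_imp_deriv)
  qed
  have "fold_prod D (\<lambda>a b. \<Sum>k\<in>K. c k * E k a b) x y
      = integral {0..1} (\<lambda>t. \<Sum>k\<in>K. c k * (deriv (\<lambda>s. D x s) t * deriv (\<lambda>s. E k s y) t))"
    unfolding fold_prod_def
  proof (rule integral_spike[OF nN])
    fix t assume "t \<in> {0..1} - N"
    then show "(\<Sum>k\<in>K. c k * (deriv (\<lambda>s. D x s) t * deriv (\<lambda>s. E k s y) t)) = deriv (\<lambda>s. D x s) t * deriv (\<lambda>s. \<Sum>k\<in>K. c k * E k s y) t"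
      using dsum by (simp add: sum_distrib_left mult.left_commute)
  qed
  also have "\<dots> = (\<Sum>k\<in>K. integral {0..1} (\<lambda>t. c k * (deriv (\<lambda>s. D x s) t * deriv (\<lambda>s. E k s y) t)))"
  proof (rule integral_sum[OF K])
    fix k assume "k \<in> K"
    show "(\<lambda>t. c k * (deriv (\<lambda>s. D x s) t * deriv (\<lambda>s. E k s y) t)) integrable_on {0..1}"
      by (rule integrable_on_mult_right[OF fp_int[OF D E[OF \<open>k \<in> K\<close>] x y]])
  qed
  also have "\<dots> = (\<Sum>k\<in>K. c k * fold_prod D (E k) x y)"
    unfolding fold_prod_def by simp
  finally show ?thesis .
qed

lemma fp_lin_left:
  assumes E: "is_copula E" and D: "\<And>k. k \<in> K \<Longrightarrow> is_copula (D k)" and K: "finite K"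
    and x: "x \<in> {0..1}" and y: "y \<in> {0..1}"
  shows "fold_prod (\<lambda>a b. \<Sum>k\<in>K. c k * D k a b) E x y = (\<Sum>k\<in>K. c k * fold_prod (D k) E x y)"
proof -
  have ex: "\<forall>k\<in>K. \<exists>N. negligible N \<and> (\<forall>t\<in>{0..1} - N. ((\<lambda>s. D k x s) has_real_derivative deriv (\<lambda>s. D k x s) t) (at t))"
  proof
    fix k assume "k \<in> K"
    from cop_R_ae[OF D[OF this] x] obtain N where N: "negligible N"
      "\<forall>t\<in>{0..1} - N. ((\<lambda>s. D k x s) has_real_derivative deriv (\<lambda>s. D k x s) t) (at t) \<and> 0 \<le> deriv (\<lambda>s. D k x s) t \<and> deriv (\<lambda>s. D k x s) t \<le> 1"
      by (elim exE conjE)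
    show "\<exists>N. negligible N \<and> (\<forall>t\<in>{0..1} - N. ((\<lambda>s. D k x s) has_real_derivative deriv (\<lambda>s. D k x s) t) (at t))"
      using N by (intro exI[of _ N]) simp
  qed
  obtain NN where NN: "\<forall>k\<in>K. negligible (NN k) \<and> (\<forall>t\<in>{0..1} - NN k. ((\<lambda>s. D k x s) has_real_derivative deriv (\<lambda>s. D k x s) t) (at t))"
    using bchoice[OF ex] by blast
  define N where "N = \<Union>(NN ` K)"
  have nN: "negligible N" unfolding N_def using NN K by (intro negligible_Union) auto
  have dsum: "deriv (\<lambda>s. \<Sum>k\<in>K. c k * D k x s) t = (\<Sum>k\<in>K. c k * deriv (\<lambda>s. D k x s) t)" if t: "t \<in> {0..1} - N" for t
  proof -
    have "((\<lambda>s. \<Sum>k\<in>K. c k * D k x s) has_real_derivative (\<Sum>k\<in>K. c k * deriv (\<lambda>s. D k x s) t)) (at t)"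
    proof (rule DERIV_sum)
      fix k assume "k \<in> K"
      then have "((\<lambda>s. D k x s) has_real_derivative deriv (\<lambda>s. D k x s) t) (at t)" using NN t by (auto simp: N_def)
      then show "((\<lambda>s. c k * D k x s) has_real_derivative c k * deriv (\<lambda>s. D k x s) t) (at t)"
        by (rule DERIV_cmult)
    qed
    then show ?thesis by (rule DERIV_imp_deriv)
  qed
  have "fold_prod (\<lambda>a b. \<Sum>k\<in>K. c k * D k a b) E x y
      = integral {0..1} (\<lambda>t. \<Sum>k\<in>K. c k * (deriv (\<lambda>s. D k x s) t * deriv (\<lambda>s. E s y) t))"
    unfolding fold_prod_def
  proof (rule integral_spike[OF nN])
    fix t assume "t \<in> {0..1} - N"
    then show "(\<Sum>k\<in>K. c k * (deriv (\<lambda>s. D k x s) t * deriv (\<lambda>s. E s y) t)) = deriv (\<lambda>s. \<Sum>k\<in>K. c k * D k x s) t * deriv (\<lambda>s. E s y) t"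
      using dsum by (simp add: sum_distrib_right mult.assoc)
  qed
  also have "\<dots> = (\<Sum>k\<in>K. integral {0..1} (\<lambda>t. c k * (deriv (\<lambda>s. D k x s) t * deriv (\<lambda>s. E s y) t)))"
  proof (rule integral_sum[OF K])
    fix k assume "k \<in> K"
    show "(\<lambda>t. c k * (deriv (\<lambda>s. D k x s) t * deriv (\<lambda>s. E s y) t)) integrable_on {0..1}"
      by (rule integrable_on_mult_right[OF fp_int[OF D[OF \<open>k \<in> K\<close>] E x y]])
  qed
  also have "\<dots> = (\<Sum>k\<in>K. c k * fold_prod (D k) E x y)"
    unfolding fold_prod_def by simp
  finally show ?thesis .
qed

lemma fp_cong:
  assumes DD: "\<And>a b. a \<in> {0..1} \<Longrightarrow> b \<in> {0..1} \<Longrightarrow> D a b = D' a b"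
    and EE: "\<And>a b. a \<in> {0..1} \<Longrightarrow> b \<in> {0..1} \<Longrightarrow> E a b = E' a b"
    and x: "x \<in> {0..1}" and y: "y \<in> {0..1}"
  shows "fold_prod D E x y = fold_prod D' E' x y"
  unfolding fold_prod_def
proof (rule integral_spike[of "{0,1}"])
  fix t :: real assume t: "t \<in> {0..1} - {0,1}"
  then have t': "t \<in> {0<..<1}" by auto
  have "deriv (\<lambda>s. D x s) t = deriv (\<lambda>s. D' x s) t"
    by (rule deriv_cong_ev[OF local_eq_nhds[OF t'] refl]) (use DD x in auto)
  moreover have "deriv (\<lambda>s. E s y) t = deriv (\<lambda>s. E' s y) t"
    by (rule deriv_cong_ev[OF local_eq_nhds[OF t'] refl]) (use EE y in auto)
  ultimately show "deriv (\<lambda>s. D' x s) t * deriv (\<lambda>s. E' s y) t = deriv (\<lambda>s. D x s) t * deriv (\<lambda>s. E s y) t" by simp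
qed simp


lemma deriv_mono_nonneg:
  fixes g :: "real \<Rightarrow> real"
  assumes mono: "\<And>a b. a \<in> {0..1} \<Longrightarrow> b \<in> {0..1} \<Longrightarrow> a \<le> b \<Longrightarrow> g a \<le> g b"
    and t: "t \<in> {0<..<1}" and d: "(g has_real_derivative d) (at t)"
  shows "0 \<le> d"
proof -
  have lim: "(dq g t \<longlongrightarrow> d) (at 0)" using d unfolding DERIV_def dq_def .
  have ev: "\<forall>\<^sub>F h in at 0. 0 \<le> dq g t h"
    unfolding eventually_at
  proof (intro exI[of _ "min t (1 - t)"] conjI ballI impI)
    show "0 < min t (1 - t)" using t by simp
    fix h :: real assume h: "h \<noteq> 0 \<and> dist h 0 < min t (1 - t)"
    then have hb: "t + h \<in> {0..1}" "t \<in> {0..1}" using t by (auto simp: dist_real_def)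
    show "0 \<le> dq g t h"
    proof (cases "h > 0")
      case True
      then show ?thesis using mono[OF hb(2) hb(1)] by (simp add: dq_def)
    next
      case False
      then have "h < 0" using h by simp
      then show ?thesis using mono[OF hb(1) hb(2)] by (simp add: dq_def divide_nonpos_neg)
    qed
  qed
  show ?thesis by (rule tendsto_lowerbound[OF lim ev trivial_limit_at])
qed

lemma deriv_loc_const:
  assumes "\<And>s. s \<in> {0..1} \<Longrightarrow> f s = (c::real)" "t \<in> {0<..<1::real}"
  shows "deriv f t = 0"
proof -
  have "deriv f t = deriv (\<lambda>s. c) t" by (rule deriv_cong_ev[OF local_eq_nhds[OF assms(2)] refl]) (use assms in auto)
  then show ?thesis by simp
qed

lemma deriv_loc_id:
  assumes "\<And>s. s \<in> {0..1} \<Longrightarrow> f s = s" "t \<in> {0<..<1::real}"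
  shows "deriv f t = 1"
proof -
  have "deriv f t = deriv (\<lambda>s. s) t" by (rule deriv_cong_ev[OF local_eq_nhds[OF assms(2)] refl]) (use assms in auto)
  then show ?thesis by simp
qed

lemma fp_copula:
  assumes D: "is_copula D" and E: "is_copula E"
  shows "is_copula (fold_prod D E)"
proof -
  have Db: "\<And>u. u \<in> {0..1} \<Longrightarrow> D u 0 = 0 \<and> D 0 u = 0 \<and> D u 1 = u \<and> D 1 u = u"
   and Dinc: "\<And>u1 u2 v1 v2. 0 \<le> u1 \<Longrightarrow> u1 \<le> u2 \<Longrightarrow> u2 \<le> 1 \<Longrightarrow> 0 \<le> v1 \<Longrightarrow> v1 \<le> v2 \<Longrightarrow> v2 \<le> 1 \<Longrightarrow>
        D u2 v2 - D u2 v1 - D u1 v2 + D u1 v1 \<ge> 0"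
    using D unfolding is_copula_def by blast+
  have Eb: "\<And>u. u \<in> {0..1} \<Longrightarrow> E u 0 = 0 \<and> E 0 u = 0 \<and> E u 1 = u \<and> E 1 u = u"
   and Einc: "\<And>u1 u2 v1 v2. 0 \<le> u1 \<Longrightarrow> u1 \<le> u2 \<Longrightarrow> u2 \<le> 1 \<Longrightarrow> 0 \<le> v1 \<Longrightarrow> v1 \<le> v2 \<Longrightarrow> v2 \<le> 1 \<Longrightarrow>
        E u2 v2 - E u2 v1 - E u1 v2 + E u1 v1 \<ge> 0"
    using E unfolding is_copula_def by blast+
  have b1: "fold_prod D E u 0 = 0" if u: "u \<in> {0..1}" for u
  proof -
    have "fold_prod D E u 0 = integral {0..1::real} (\<lambda>t. 0::real)" unfolding fold_prod_def
    proof (rule integral_spike[of "{0,1}"])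
      fix t :: real assume "t \<in> {0..1} - {0,1}"
      then have t: "t \<in> {0<..<1}" by auto
      have "deriv (\<lambda>s. E s 0) t = 0" by (rule deriv_loc_const[OF _ t]) (use Eb in auto)
      then show "0 = deriv (\<lambda>s. D u s) t * deriv (\<lambda>s. E s 0) t" by simp
    qed simp
    then show ?thesis by simp
  qed
  have b2: "fold_prod D E 0 u = 0" if u: "u \<in> {0..1}" for u
  proof -
    have "fold_prod D E 0 u = integral {0..1::real} (\<lambda>t. 0::real)" unfolding fold_prod_def
    proof (rule integral_spike[of "{0,1}"])
      fix t :: real assume "t \<in> {0..1} - {0,1}"
      then have t: "t \<in> {0<..<1}" by auto
      have "deriv (\<lambda>s. D 0 s) t = 0" by (rule deriv_loc_const[OF _ t]) (use Db in auto)
      then show "0 = deriv (\<lambda>s. D 0 s) t * deriv (\<lambda>s. E s u) t" by simp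
    qed simp
    then show ?thesis by simp
  qed
  have b3: "fold_prod D E u 1 = u" if u: "u \<in> {0..1}" for u
  proof -
    have "(deriv (\<lambda>s. D u s) has_integral D u 1) {0..1}" using cop_R_int[OF D u, of 1] by simp
    then have "(deriv (\<lambda>s. D u s) has_integral u) {0..1}" using Db[OF u] by simp
    then have "((\<lambda>t. deriv (\<lambda>s. D u s) t * deriv (\<lambda>s. E s 1) t) has_integral u) {0..1}"
    proof (rule has_integral_spike[of "{0,1}", rotated 2])
      fix t :: real assume "t \<in> {0..1} - {0,1}"
      then have t: "t \<in> {0<..<1}" by auto
      have "deriv (\<lambda>s. E s 1) t = 1" by (rule deriv_loc_id[OF _ t]) (use Eb in auto)
      then show "deriv (\<lambda>s. D u s) t * deriv (\<lambda>s. E s 1) t = deriv (\<lambda>s. D u s) t" by simp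
    qed simp
    then show ?thesis unfolding fold_prod_def by (rule integral_unique)
  qed
  have b4: "fold_prod D E 1 u = u" if u: "u \<in> {0..1}" for u
  proof -
    have "(deriv (\<lambda>s. E s u) has_integral E 1 u) {0..1}" using cop_L_int[OF E u, of 1] by simp
    then have "(deriv (\<lambda>s. E s u) has_integral u) {0..1}" using Eb[OF u] by simp
    then have "((\<lambda>t. deriv (\<lambda>s. D 1 s) t * deriv (\<lambda>s. E s u) t) has_integral u) {0..1}"
    proof (rule has_integral_spike[of "{0,1}", rotated 2])
      fix t :: real assume "t \<in> {0..1} - {0,1}"
      then have t: "t \<in> {0<..<1}" by auto
      have "deriv (\<lambda>s. D 1 s) t = 1" by (rule deriv_loc_id[OF _ t]) (use Db in auto)
      then show "deriv (\<lambda>s. D 1 s) t * deriv (\<lambda>s. E s u) t = deriv (\<lambda>s. E s u) t" by simp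
    qed simp
    then show ?thesis unfolding fold_prod_def by (rule integral_unique)
  qed
  have inc: "fold_prod D E u2 v2 - fold_prod D E u2 v1 - fold_prod D E u1 v2 + fold_prod D E u1 v1 \<ge> 0"
    if h: "0 \<le> u1" "u1 \<le> u2" "u2 \<le> 1" "0 \<le> v1" "v1 \<le> v2" "v2 \<le> 1" for u1 u2 v1 v2
  proof -
    have u1: "u1 \<in> {0..1}" and u2: "u2 \<in> {0..1}" and v1: "v1 \<in> {0..1}" and v2: "v2 \<in> {0..1}" using h by auto
    obtain N1 where N1: "negligible N1" "\<forall>t\<in>{0..1} - N1. ((\<lambda>s. D u1 s) has_real_derivative deriv (\<lambda>s. D u1 s) t) (at t)"
      using cop_R_ae[OF D u1] by blast
    obtain N2 where N2: "negligible N2" "\<forall>t\<in>{0..1} - N2. ((\<lambda>s. D u2 s) has_real_derivative deriv (\<lambda>s. D u2 s) t) (at t)"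
      using cop_R_ae[OF D u2] by blast
    obtain N3 where N3: "negligible N3" "\<forall>t\<in>{0..1} - N3. ((\<lambda>s. E s v1) has_real_derivative deriv (\<lambda>s. E s v1) t) (at t)"
      using cop_L_ae[OF E v1] by blast
    obtain N4 where N4: "negligible N4" "\<forall>t\<in>{0..1} - N4. ((\<lambda>s. E s v2) has_real_derivative deriv (\<lambda>s. E s v2) t) (at t)"
      using cop_L_ae[OF E v2] by blast
    define N where "N = N1 \<union> N2 \<union> N3 \<union> N4 \<union> {0,1}"
    have nN: "negligible N" unfolding N_def using N1 N2 N3 N4 by auto
    define a1 where "a1 = deriv (\<lambda>s. D u1 s)"
    define a2 where "a2 = deriv (\<lambda>s. D u2 s)"
    define b1 where "b1 = deriv (\<lambda>s. E s v1)"
    define b2 where "b2 = deriv (\<lambda>s. E s v2)"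
    have pos: "0 \<le> (a2 t - a1 t) * (b2 t - b1 t)" if t: "t \<in> {0..1} - N" for t
    proof -
      have t': "t \<in> {0<..<1}" using t by (auto simp: N_def)
      have d1: "((\<lambda>s. D u2 s - D u1 s) has_real_derivative a2 t - a1 t) (at t)"
        unfolding a1_def a2_def using N1 N2 t by (intro DERIV_diff) (auto simp: N_def)
      have m1: "D u2 a - D u1 a \<le> D u2 b - D u1 b" if "a \<in> {0..1}" "b \<in> {0..1}" "a \<le> b" for a b
        using Dinc[of u1 u2 a b] h that by auto
      have p1: "0 \<le> a2 t - a1 t"
        by (rule deriv_mono_nonneg[where g="\<lambda>s. D u2 s - D u1 s", OF m1 t' d1])
      have d2: "((\<lambda>s. E s v2 - E s v1) has_real_derivative b2 t - b1 t) (at t)"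
        unfolding b1_def b2_def using N3 N4 t by (intro DERIV_diff) (auto simp: N_def)
      have m2: "E a v2 - E a v1 \<le> E b v2 - E b v1" if "a \<in> {0..1}" "b \<in> {0..1}" "a \<le> b" for a b
        using Einc[of a b v1 v2] h that by auto
      have p2: "0 \<le> b2 t - b1 t"
        by (rule deriv_mono_nonneg[where g="\<lambda>s. E s v2 - E s v1", OF m2 t' d2])
      show ?thesis using p1 p2 by simp
    qed
    have i11: "((\<lambda>t. a1 t * b1 t) has_integral fold_prod D E u1 v1) {0..1}"
      unfolding a1_def b1_def fold_prod_def using fp_int[OF D E u1 v1] by (rule integrable_integral)
    have i12: "((\<lambda>t. a1 t * b2 t) has_integral fold_prod D E u1 v2) {0..1}"
      unfolding a1_def b2_def fold_prod_def using fp_int[OF D E u1 v2] by (rule integrable_integral)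
    have i21: "((\<lambda>t. a2 t * b1 t) has_integral fold_prod D E u2 v1) {0..1}"
      unfolding a2_def b1_def fold_prod_def using fp_int[OF D E u2 v1] by (rule integrable_integral)
    have i22: "((\<lambda>t. a2 t * b2 t) has_integral fold_prod D E u2 v2) {0..1}"
      unfolding a2_def b2_def fold_prod_def using fp_int[OF D E u2 v2] by (rule integrable_integral)
    have "((\<lambda>t. a2 t * b2 t - a2 t * b1 t - a1 t * b2 t + a1 t * b1 t) has_integral
        (fold_prod D E u2 v2 - fold_prod D E u2 v1 - fold_prod D E u1 v2 + fold_prod D E u1 v1)) {0..1}"
      by (intro has_integral_add has_integral_diff i11 i12 i21 i22)
    then have "((\<lambda>t. if t \<in> N then 0 else (a2 t - a1 t) * (b2 t - b1 t)) has_integral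
        (fold_prod D E u2 v2 - fold_prod D E u2 v1 - fold_prod D E u1 v2 + fold_prod D E u1 v1)) {0..1}"
      by (rule has_integral_spike[OF nN, rotated]) (simp add: algebra_simps)
    then show ?thesis by (rule has_integral_nonneg) (use pos in auto)
  qed
  show ?thesis unfolding is_copula_def using b1 b2 b3 b4 inc by blast
qed

lemma copM_copula: "is_copula copM"
  unfolding is_copula_def copM_def by (auto simp: min_def)

lemma copPi_copula: "is_copula copPi"
  unfolding is_copula_def copPi_def
proof (intro conjI ballI allI impI)
  fix u1 u2 v1 v2 :: real
  assume "0 \<le> u1 \<and> u1 \<le> u2 \<and> u2 \<le> 1 \<and> 0 \<le> v1 \<and> v1 \<le> v2 \<and> v2 \<le> 1"
  then have "0 \<le> (u2 - u1) * (v2 - v1)" by simp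
  then show "0 \<le> u2 * v2 - u2 * v1 - u1 * v2 + u1 * v1" by (simp add: algebra_simps)
qed auto

lemma cop_mix:
  assumes C1: "is_copula C1" and C2: "is_copula C2" and ab: "0 \<le> a" "0 \<le> b" "a + b = 1"
  shows "is_copula (\<lambda>x y. a * C1 x y + b * C2 x y)"
proof -
  have B1: "\<And>u. u \<in> {0..1} \<Longrightarrow> C1 u 0 = 0 \<and> C1 0 u = 0 \<and> C1 u 1 = u \<and> C1 1 u = u"
   and I1: "\<And>u1 u2 v1 v2. 0 \<le> u1 \<Longrightarrow> u1 \<le> u2 \<Longrightarrow> u2 \<le> 1 \<Longrightarrow> 0 \<le> v1 \<Longrightarrow> v1 \<le> v2 \<Longrightarrow> v2 \<le> 1 \<Longrightarrow>
        C1 u2 v2 - C1 u2 v1 - C1 u1 v2 + C1 u1 v1 \<ge> 0"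
    using C1 unfolding is_copula_def by blast+
  have B2: "\<And>u. u \<in> {0..1} \<Longrightarrow> C2 u 0 = 0 \<and> C2 0 u = 0 \<and> C2 u 1 = u \<and> C2 1 u = u"
   and I2: "\<And>u1 u2 v1 v2. 0 \<le> u1 \<Longrightarrow> u1 \<le> u2 \<Longrightarrow> u2 \<le> 1 \<Longrightarrow> 0 \<le> v1 \<Longrightarrow> v1 \<le> v2 \<Longrightarrow> v2 \<le> 1 \<Longrightarrow>
        C2 u2 v2 - C2 u2 v1 - C2 u1 v2 + C2 u1 v1 \<ge> 0"
    using C2 unfolding is_copula_def by blast+
  have bd: "a * C1 u 0 + b * C2 u 0 = 0 \<and> a * C1 0 u + b * C2 0 u = 0 \<and> a * C1 u 1 + b * C2 u 1 = u \<and> a * C1 1 u + b * C2 1 u = u"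
    if "u \<in> {0..1}" for u
  proof -
    have "a * u + b * u = u" using ab(3) by (metis distrib_right mult_1)
    then show ?thesis using B1[OF that] B2[OF that] by simp
  qed
  have inc: "0 \<le> (a * C1 u2 v2 + b * C2 u2 v2) - (a * C1 u2 v1 + b * C2 u2 v1) - (a * C1 u1 v2 + b * C2 u1 v2) + (a * C1 u1 v1 + b * C2 u1 v1)"
    if h: "0 \<le> u1" "u1 \<le> u2" "u2 \<le> 1" "0 \<le> v1" "v1 \<le> v2" "v2 \<le> 1" for u1 u2 v1 v2
  proof -
    have "0 \<le> a * (C1 u2 v2 - C1 u2 v1 - C1 u1 v2 + C1 u1 v1)" using I1[OF h] ab by simp
    moreover have "0 \<le> b * (C2 u2 v2 - C2 u2 v1 - C2 u1 v2 + C2 u1 v1)" using I2[OF h] ab by simp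
    ultimately show ?thesis by (simp add: algebra_simps)
  qed
  show ?thesis unfolding is_copula_def using bd inc by blast
qed


lemma fp_lin_left2:
  assumes E: "is_copula E" and D1: "is_copula D1" and D2: "is_copula D2"
    and x: "x \<in> {0..1}" and y: "y \<in> {0..1}"
  shows "fold_prod (\<lambda>a b. \<alpha> * D1 a b + \<beta> * D2 a b) E x y = \<alpha> * fold_prod D1 E x y + \<beta> * fold_prod D2 E x y"
proof -
  define Dk where "Dk = (\<lambda>k::bool. if k then D1 else D2)"
  define c where "c = (\<lambda>k::bool. if k then \<alpha> else \<beta>)"
  have eq: "(\<lambda>a b. \<alpha> * D1 a b + \<beta> * D2 a b) = (\<lambda>a b. \<Sum>k\<in>UNIV. c k * Dk k a b)"
    by (simp add: UNIV_bool c_def Dk_def add.commute)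
  have "fold_prod (\<lambda>a b. \<Sum>k\<in>UNIV. c k * Dk k a b) E x y = (\<Sum>k\<in>UNIV. c k * fold_prod (Dk k) E x y)"
    by (rule fp_lin_left[OF E _ _ x y]) (auto simp: Dk_def D1 D2)
  then show ?thesis unfolding eq by (simp add: UNIV_bool c_def Dk_def add.commute)
qed

lemma fp_lin_right2:
  assumes D: "is_copula D" and E1: "is_copula E1" and E2: "is_copula E2"
    and x: "x \<in> {0..1}" and y: "y \<in> {0..1}"
  shows "fold_prod D (\<lambda>a b. \<alpha> * E1 a b + \<beta> * E2 a b) x y = \<alpha> * fold_prod D E1 x y + \<beta> * fold_prod D E2 x y"
proof -
  define Ek where "Ek = (\<lambda>k::bool. if k then E1 else E2)"
  define c where "c = (\<lambda>k::bool. if k then \<alpha> else \<beta>)"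
  have eq: "(\<lambda>a b. \<alpha> * E1 a b + \<beta> * E2 a b) = (\<lambda>a b. \<Sum>k\<in>UNIV. c k * Ek k a b)"
    by (simp add: UNIV_bool c_def Ek_def add.commute)
  have "fold_prod D (\<lambda>a b. \<Sum>k\<in>UNIV. c k * Ek k a b) x y = (\<Sum>k\<in>UNIV. c k * fold_prod D (Ek k) x y)"
    by (rule fp_lin_right[OF D _ _ x y]) (auto simp: Ek_def E1 E2)
  then show ?thesis unfolding eq by (simp add: UNIV_bool c_def Ek_def add.commute)
qed

lemma fold_pow_copula: "is_copula C \<Longrightarrow> is_copula (fold_pow C n)"
  by (induction n) (auto simp: copM_copula fp_copula)

lemma fold_pow_Suc:
  assumes C: "is_copula C" and x: "x \<in> {0..1}" and y: "y \<in> {0..1}"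
  shows "fold_pow C (Suc n) x y = fold_prod (fold_pow C n) C x y"
proof (cases "n = 0")
  case True
  then show ?thesis using fp_M_left[OF C x y] by simp
qed simp

lemma cop_range:
  assumes C: "is_copula C" and x: "x \<in> {0..1}" and y: "y \<in> {0..1}"
  shows "0 \<le> C x y \<and> C x y \<le> 1"
proof -
  have "0 \<le> C x y - C x 0" "C x y - C x 0 \<le> y - 0" using cop_bounds[OF C x, of 0 y] y by auto
  moreover have "C x 0 = 0" using C x by (auto simp: is_copula_def)
  ultimately show ?thesis using y by auto
qed

lemma part2_formula:
  assumes C: "is_copula C" and th: "0 \<le> \<theta>" "\<theta> \<le> 1"
  shows "\<forall>x\<in>{0..1}. \<forall>y\<in>{0..1}. fold_pow (\<lambda>x y. (1 - \<theta>) * C x y + \<theta> * copPi x y) n x y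
          = (1 - \<theta>) ^ n * fold_pow C n x y + (1 - (1 - \<theta>) ^ n) * copPi x y"
proof (induction n)
  case 0
  then show ?case by simp
next
  case (Suc n)
  define A where "A = (\<lambda>x y. (1 - \<theta>) * C x y + \<theta> * copPi x y)"
  have A: "is_copula A" unfolding A_def by (rule cop_mix[OF C copPi_copula]) (use th in auto)
  have Cn: "is_copula (fold_pow C n)" by (rule fold_pow_copula[OF C])
  show ?case
  proof (intro ballI)
    fix x y :: real assume x: "x \<in> {0..1}" and y: "y \<in> {0..1}"
    have "fold_pow A (Suc n) x y = fold_prod (fold_pow A n) A x y" by (rule fold_pow_Suc[OF A x y])
    also have "\<dots> = fold_prod (\<lambda>a b. (1 - \<theta>) ^ n * fold_pow C n a b + (1 - (1 - \<theta>) ^ n) * copPi a b) A x y"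
      by (rule fp_cong[OF _ _ x y]) (use Suc.IH in \<open>auto simp: A_def\<close>)
    also have "\<dots> = (1 - \<theta>) ^ n * fold_prod (fold_pow C n) A x y + (1 - (1 - \<theta>) ^ n) * fold_prod copPi A x y"
      by (rule fp_lin_left2[OF A Cn copPi_copula x y])
    also have "fold_prod (fold_pow C n) A x y = (1 - \<theta>) * fold_prod (fold_pow C n) C x y + \<theta> * fold_prod (fold_pow C n) copPi x y"
      unfolding A_def by (rule fp_lin_right2[OF Cn C copPi_copula x y])
    also have "fold_prod (fold_pow C n) C x y = fold_pow C (Suc n) x y" by (rule fold_pow_Suc[OF C x y, symmetric])
    also have "fold_prod (fold_pow C n) copPi x y = copPi x y" by (rule fp_Pi_right[OF Cn x y])
    also have "fold_prod copPi A x y = copPi x y" by (rule fp_Pi_left[OF A x y])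
    finally have "fold_pow A (Suc n) x y = (1 - \<theta>) ^ Suc n * fold_pow C (Suc n) x y + (1 - (1 - \<theta>) ^ Suc n) * copPi x y"
      by (simp add: algebra_simps)
    then show "fold_pow (\<lambda>x y. (1 - \<theta>) * C x y + \<theta> * copPi x y) (Suc n) x y = (1 - \<theta>) ^ Suc n * fold_pow C (Suc n) x y + (1 - (1 - \<theta>) ^ Suc n) * copPi x y"
      unfolding A_def .
  qed
qed

lemma part2:
  assumes C: "is_copula C" and th: "0 < \<theta>" "\<theta> < 1" and u: "u \<in> {0..1}" and v: "v \<in> {0..1}"
  shows "(\<lambda>n. fold_pow (\<lambda>x y. (1 - \<theta>) * C x y + \<theta> * copPi x y) n u v) \<longlonglongrightarrow> copPi u v"
proof -
  have eq: "fold_pow (\<lambda>x y. (1 - \<theta>) * C x y + \<theta> * copPi x y) n u v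
          = (1 - \<theta>) ^ n * fold_pow C n u v + (1 - (1 - \<theta>) ^ n) * copPi u v" for n
    using part2_formula[OF C, of \<theta> n] th u v by auto
  have p0: "(\<lambda>n. (1 - \<theta>) ^ n) \<longlonglongrightarrow> 0" using th by (intro LIMSEQ_power_zero) auto
  have "(\<lambda>n. (1 - \<theta>) ^ n * fold_pow C n u v) \<longlonglongrightarrow> 0"
  proof (rule Lim_null_comparison[OF _ p0])
    show "\<forall>\<^sub>F n in sequentially. norm ((1 - \<theta>) ^ n * fold_pow C n u v) \<le> (1 - \<theta>) ^ n"
    proof (intro always_eventually allI)
      fix n
      have "0 \<le> fold_pow C n u v \<and> fold_pow C n u v \<le> 1" by (rule cop_range[OF fold_pow_copula[OF C] u v])
      moreover have "0 \<le> (1 - \<theta>) ^ n" using th by simp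
      ultimately show "norm ((1 - \<theta>) ^ n * fold_pow C n u v) \<le> (1 - \<theta>) ^ n"
        by (simp add: abs_mult mult_left_le)
    qed
  qed
  then have "(\<lambda>n. (1 - \<theta>) ^ n * fold_pow C n u v + (1 - (1 - \<theta>) ^ n) * copPi u v) \<longlonglongrightarrow> 0 + (1 - 0) * copPi u v"
    by (intro tendsto_intros p0)
  then show ?thesis unfolding eq by simp
qed


lemma poly_geom_0:
  fixes \<theta> :: real
  assumes th: "0 < \<theta>" "\<theta> < 1"
  shows "(\<lambda>n. real n ^ k * \<theta> ^ n) \<longlonglongrightarrow> 0"
proof -
  define c where "c = - ln \<theta>"
  have c: "c > 0" using th by (simp add: c_def)
  have f: "filterlim (\<lambda>n. c * real n) at_top sequentially"
    by (rule filterlim_tendsto_pos_mult_at_top[OF tendsto_const c filterlim_real_sequentially])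
  have g: "(\<lambda>n. (c * real n) ^ k / exp (c * real n)) \<longlonglongrightarrow> 0"
    by (rule filterlim_compose[OF tendsto_power_div_exp_0 f])
  have eq: "real n ^ k * \<theta> ^ n = (c * real n) ^ k / exp (c * real n) / c ^ k" for n
  proof -
    have "\<theta> ^ n = exp (ln \<theta>) ^ n" using th by simp
    also have "\<dots> = exp (real n * ln \<theta>)" by (rule exp_of_nat_mult[symmetric])
    finally have t: "\<theta> ^ n = exp (real n * ln \<theta>)" .
    have "exp (c * real n) = inverse (exp (real n * ln \<theta>))" by (simp add: c_def exp_minus mult.commute)
    then show ?thesis using c t by (simp add: power_mult_distrib field_simps)
  qed
  have "(\<lambda>n. (c * real n) ^ k / exp (c * real n) / c ^ k) \<longlonglongrightarrow> 0 / c ^ k"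
    by (rule tendsto_divide[OF g tendsto_const]) (use c in simp)
  then show ?thesis unfolding eq by simp
qed

definition wt :: "real \<Rightarrow> nat \<Rightarrow> nat \<Rightarrow> real" where
  "wt \<theta> n k = real (n choose k) * (1 - \<theta>) ^ k * \<theta> ^ (n - k)"

lemma wt_step: "wt \<theta> (Suc n) (Suc k) = (1 - \<theta>) * wt \<theta> n k + \<theta> * wt \<theta> n (Suc k)"
proof (cases "k < n")
  case True
  then have e: "n - k = Suc (n - Suc k)" by simp
  have p: "\<theta> ^ (n - k) = \<theta> * \<theta> ^ (n - Suc k)" unfolding e by simp
  show ?thesis unfolding wt_def binomial_Suc_Suc by (simp add: p algebra_simps)
next
  case False
  then have z: "n choose Suc k = 0" by simp
  show ?thesis unfolding wt_def binomial_Suc_Suc by (simp add: z algebra_simps)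
qed

lemma wt_zero: "wt \<theta> (Suc n) 0 = \<theta> * wt \<theta> n 0"
  unfolding wt_def by simp

lemma wt_gt: "n < k \<Longrightarrow> wt \<theta> n k = 0"
  unfolding wt_def by simp

lemma wt_nonneg: "0 \<le> \<theta> \<Longrightarrow> \<theta> \<le> 1 \<Longrightarrow> 0 \<le> wt \<theta> n k"
  unfolding wt_def by simp

lemma wt_sum: "(\<Sum>k\<le>n. wt \<theta> n k) = 1"
proof -
  have "((1 - \<theta>) + \<theta>) ^ n = (\<Sum>k\<le>n. of_nat (n choose k) * (1 - \<theta>) ^ k * \<theta> ^ (n - k))"
    by (rule binomial_ring)
  then show ?thesis by (simp add: wt_def)
qed

lemma binom_step:
  "(\<Sum>k\<le>n. wt \<theta> n k * ((1 - \<theta>) * a (Suc k) + \<theta> * a k)) = (\<Sum>k\<le>Suc n. wt \<theta> (Suc n) k * a k)"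
proof -
  have s1: "(\<Sum>k\<le>n. wt \<theta> n k * (\<theta> * a k)) = (\<Sum>k\<le>Suc n. wt \<theta> n k * (\<theta> * a k))"
    by (simp add: wt_gt)
  also have "\<dots> = wt \<theta> n 0 * (\<theta> * a 0) + (\<Sum>k\<le>n. wt \<theta> n (Suc k) * (\<theta> * a (Suc k)))"
    by (rule sum.atMost_Suc_shift)
  finally have s1': "(\<Sum>k\<le>n. wt \<theta> n k * (\<theta> * a k)) = wt \<theta> n 0 * (\<theta> * a 0) + (\<Sum>k\<le>n. wt \<theta> n (Suc k) * (\<theta> * a (Suc k)))" .
  have "(\<Sum>k\<le>n. wt \<theta> n k * ((1 - \<theta>) * a (Suc k) + \<theta> * a k))
      = (\<Sum>k\<le>n. wt \<theta> n k * ((1 - \<theta>) * a (Suc k))) + (\<Sum>k\<le>n. wt \<theta> n k * (\<theta> * a k))"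
    by (simp add: distrib_left sum.distrib)
  also have "\<dots> = wt \<theta> n 0 * (\<theta> * a 0) + (\<Sum>k\<le>n. ((1 - \<theta>) * wt \<theta> n k + \<theta> * wt \<theta> n (Suc k)) * a (Suc k))"
  proof -
    have "(\<Sum>k\<le>n. ((1 - \<theta>) * wt \<theta> n k + \<theta> * wt \<theta> n (Suc k)) * a (Suc k))
        = (\<Sum>k\<le>n. wt \<theta> n k * ((1 - \<theta>) * a (Suc k)) + wt \<theta> n (Suc k) * (\<theta> * a (Suc k)))"
      by (rule sum.cong) (auto simp: algebra_simps)
    also have "\<dots> = (\<Sum>k\<le>n. wt \<theta> n k * ((1 - \<theta>) * a (Suc k))) + (\<Sum>k\<le>n. wt \<theta> n (Suc k) * (\<theta> * a (Suc k)))"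
      by (rule sum.distrib)
    finally show ?thesis unfolding s1' by simp
  qed
  also have "\<dots> = wt \<theta> (Suc n) 0 * a 0 + (\<Sum>k\<le>n. wt \<theta> (Suc n) (Suc k) * a (Suc k))"
    by (simp add: wt_step wt_zero)
  also have "\<dots> = (\<Sum>k\<le>Suc n. wt \<theta> (Suc n) k * a k)"
    by (rule sum.atMost_Suc_shift[symmetric])
  finally show ?thesis .
qed

lemma wt_lim:
  assumes th: "0 < \<theta>" "\<theta> < 1"
  shows "(\<lambda>n. wt \<theta> n k) \<longlonglongrightarrow> 0"
proof -
  have "(\<lambda>n. real n ^ k * \<theta> ^ n / \<theta> ^ k) \<longlonglongrightarrow> 0 / \<theta> ^ k"
    by (rule tendsto_divide[OF poly_geom_0[OF th] tendsto_const]) (use th in simp)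
  then have lim: "(\<lambda>n. real n ^ k * \<theta> ^ n / \<theta> ^ k) \<longlonglongrightarrow> 0" by simp
  show ?thesis
  proof (rule Lim_null_comparison[OF _ lim], intro always_eventually allI)
    fix n
    show "norm (wt \<theta> n k) \<le> real n ^ k * \<theta> ^ n / \<theta> ^ k"
    proof (cases "k \<le> n")
      case False
      then show ?thesis using th by (simp add: wt_gt)
    next
      case True
      have b1: "real (n choose k) \<le> real n ^ k" using binomial_le_pow[OF True] by (metis of_nat_le_iff of_nat_power)
      have b2: "(1 - \<theta>) ^ k \<le> 1" using th by (simp add: power_le_one)
      have b3: "\<theta> ^ (n - k) = \<theta> ^ n / \<theta> ^ k" using th True by (simp add: power_diff)
      have "wt \<theta> n k \<le> real n ^ k * 1 * (\<theta> ^ n / \<theta> ^ k)"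
        unfolding wt_def b3 using th b1 b2
        by (intro mult_mono) (auto intro: mult_nonneg_nonneg)
      then show ?thesis using wt_nonneg[of \<theta> n k] th by simp
    qed
  qed
qed

lemma part1_formula:
  assumes C: "is_copula C" and th: "0 \<le> \<theta>" "\<theta> \<le> 1"
  shows "\<forall>x\<in>{0..1}. \<forall>y\<in>{0..1}. fold_pow (\<lambda>x y. (1 - \<theta>) * C x y + \<theta> * copM x y) n x y
          = (\<Sum>k\<le>n. wt \<theta> n k * fold_pow C k x y)"
proof (induction n)
  case 0
  then show ?case by (simp add: wt_def)
next
  case (Suc n)
  define A where "A = (\<lambda>x y. (1 - \<theta>) * C x y + \<theta> * copM x y)"
  have A: "is_copula A" unfolding A_def by (rule cop_mix[OF C copM_copula]) (use th in auto)
  have Ck: "is_copula (fold_pow C k)" for k by (rule fold_pow_copula[OF C])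
  show ?case
  proof (intro ballI)
    fix x y :: real assume x: "x \<in> {0..1}" and y: "y \<in> {0..1}"
    have "fold_pow A (Suc n) x y = fold_prod (fold_pow A n) A x y" by (rule fold_pow_Suc[OF A x y])
    also have "\<dots> = fold_prod (\<lambda>a b. \<Sum>k\<le>n. wt \<theta> n k * fold_pow C k a b) A x y"
      by (rule fp_cong[OF _ _ x y]) (use Suc.IH in \<open>auto simp: A_def\<close>)
    also have "\<dots> = (\<Sum>k\<le>n. wt \<theta> n k * fold_prod (fold_pow C k) A x y)"
      by (rule fp_lin_left[OF A Ck _ x y]) simp
    also have "\<dots> = (\<Sum>k\<le>n. wt \<theta> n k * ((1 - \<theta>) * fold_pow C (Suc k) x y + \<theta> * fold_pow C k x y))"
    proof (rule sum.cong[OF refl])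
      fix k
      have "fold_prod (fold_pow C k) A x y = (1 - \<theta>) * fold_prod (fold_pow C k) C x y + \<theta> * fold_prod (fold_pow C k) copM x y"
        unfolding A_def by (rule fp_lin_right2[OF Ck C copM_copula x y])
      also have "fold_prod (fold_pow C k) C x y = fold_pow C (Suc k) x y" by (rule fold_pow_Suc[OF C x y, symmetric])
      also have "fold_prod (fold_pow C k) copM x y = fold_pow C k x y" by (rule fp_M_right[OF Ck x y])
      finally show "wt \<theta> n k * fold_prod (fold_pow C k) A x y = wt \<theta> n k * ((1 - \<theta>) * fold_pow C (Suc k) x y + \<theta> * fold_pow C k x y)"
        by simp
    qed
    also have "\<dots> = (\<Sum>k\<le>Suc n. wt \<theta> (Suc n) k * fold_pow C k x y)"
      by (rule binom_step)
    finally have "fold_pow A (Suc n) x y = (\<Sum>k\<le>Suc n. wt \<theta> (Suc n) k * fold_pow C k x y)" .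
    then show "fold_pow (\<lambda>x y. (1 - \<theta>) * C x y + \<theta> * copM x y) (Suc n) x y = (\<Sum>k\<le>Suc n. wt \<theta> (Suc n) k * fold_pow C k x y)"
      unfolding A_def .
  qed
qed

lemma binom_avg_limit:
  fixes a :: "nat \<Rightarrow> real"
  assumes th: "0 < \<theta>" "\<theta> < 1" and lim: "a \<longlonglongrightarrow> c" and bnd: "\<And>k. \<bar>a k\<bar> \<le> 1"
  shows "(\<lambda>n. \<Sum>k\<le>n. wt \<theta> n k * a k) \<longlonglongrightarrow> c"
proof (rule LIMSEQ_I)
  fix r :: real assume r: "0 < r"
  have cb: "\<bar>c\<bar> \<le> 1"
  proof -
    have "(\<lambda>k. \<bar>a k\<bar>) \<longlonglongrightarrow> \<bar>c\<bar>" by (rule tendsto_rabs[OF lim])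
    then show ?thesis using bnd by (intro tendsto_upperbound[of "\<lambda>k. \<bar>a k\<bar>" _ sequentially]) (auto intro: always_eventually)
  qed
  obtain K where K: "\<And>k. k \<ge> K \<Longrightarrow> \<bar>a k - c\<bar> < r / 2"
    using LIMSEQ_D[OF lim, of "r / 2"] r by auto
  define T where "T = (\<lambda>n. \<Sum>k<K. wt \<theta> n k)"
  have T0: "T \<longlonglongrightarrow> 0" unfolding T_def using wt_lim[OF th] by (intro tendsto_null_sum) auto
  obtain N where N: "\<And>n. n \<ge> N \<Longrightarrow> \<bar>T n\<bar> < r / 8"
    using LIMSEQ_D[OF T0, of "r / 8"] r by auto
  have wn: "0 \<le> wt \<theta> n k" for n k using wt_nonneg[of \<theta> n k] th by simp
  show "\<exists>no. \<forall>n\<ge>no. norm ((\<Sum>k\<le>n. wt \<theta> n k * a k) - c) < r"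
  proof (intro exI allI impI)
    fix n assume n: "n \<ge> N"
    have e1: "(\<Sum>k\<le>n. wt \<theta> n k * (a k - c)) = (\<Sum>k\<le>n. wt \<theta> n k * a k - c * wt \<theta> n k)"
      by (rule sum.cong) (auto simp: algebra_simps)
    have e2: "(\<Sum>k\<le>n. wt \<theta> n k * a k - c * wt \<theta> n k) = (\<Sum>k\<le>n. wt \<theta> n k * a k) - (\<Sum>k\<le>n. c * wt \<theta> n k)"
      by (rule sum_subtractf)
    have e3: "(\<Sum>k\<le>n. c * wt \<theta> n k) = c * (\<Sum>k\<le>n. wt \<theta> n k)"
      by (rule sum_distrib_left[symmetric])
    have "(\<Sum>k\<le>n. wt \<theta> n k * a k) - c = (\<Sum>k\<le>n. wt \<theta> n k * (a k - c))"
      using e1 e2 e3 wt_sum[of \<theta> n] by simp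
    also have "\<bar>\<dots>\<bar> \<le> (\<Sum>k\<le>n. \<bar>wt \<theta> n k * (a k - c)\<bar>)"
      by (rule sum_abs)
    also have "\<dots> = (\<Sum>k\<le>n. wt \<theta> n k * \<bar>a k - c\<bar>)"
      by (rule sum.cong) (simp_all add: abs_mult abs_of_nonneg[OF wn])
    also have "\<dots> \<le> (\<Sum>k\<le>n. (if k < K then 2 * wt \<theta> n k else 0) + wt \<theta> n k * (r / 2))"
    proof (rule sum_mono)
      fix k assume "k \<in> {..n}"
      show "wt \<theta> n k * \<bar>a k - c\<bar> \<le> (if k < K then 2 * wt \<theta> n k else 0) + wt \<theta> n k * (r / 2)"
      proof (cases "k < K")
        case True
        have "\<bar>a k - c\<bar> \<le> 2" using bnd[of k] cb by linarith
        then have "wt \<theta> n k * \<bar>a k - c\<bar> \<le> wt \<theta> n k * 2" using wn by (rule mult_left_mono)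
        moreover have "0 \<le> wt \<theta> n k * (r / 2)" using wn r by simp
        ultimately show ?thesis using True by simp
      next
        case False
        then have "\<bar>a k - c\<bar> \<le> r / 2" using K[of k] by simp
        then have "wt \<theta> n k * \<bar>a k - c\<bar> \<le> wt \<theta> n k * (r / 2)" using wn by (rule mult_left_mono)
        then show ?thesis using False by simp
      qed
    qed
    also have "\<dots> = (\<Sum>k\<le>n. (if k < K then 2 * wt \<theta> n k else 0)) + (r / 2) * (\<Sum>k\<le>n. wt \<theta> n k)"
      by (simp add: sum.distrib sum_distrib_left mult.commute)
    also have "(\<Sum>k\<le>n. wt \<theta> n k) = 1" by (rule wt_sum)
    also have "(\<Sum>k\<le>n. (if k < K then 2 * wt \<theta> n k else 0)) \<le> 2 * T n"
    proof -
      have "(\<Sum>k\<le>n. (if k < K then 2 * wt \<theta> n k else 0)) = (\<Sum>k\<in>{..n} \<inter> {..<K}. 2 * wt \<theta> n k)"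
        by (simp add: sum.If_cases Int_def)
      also have "\<dots> \<le> (\<Sum>k\<in>{..<K}. 2 * wt \<theta> n k)"
        by (rule sum_mono2) (use wn in auto)
      finally show ?thesis by (simp add: T_def sum_distrib_left)
    qed
    finally have "\<bar>(\<Sum>k\<le>n. wt \<theta> n k * a k) - c\<bar> \<le> 2 * T n + r / 2" by simp
    moreover have "T n < r / 8" using N[OF n] by simp
    ultimately show "norm ((\<Sum>k\<le>n. wt \<theta> n k * a k) - c) < r" using r by simp
  qed
qed


theorem mainTheorem3:
  fixes C Co :: "real \<Rightarrow> real \<Rightarrow> real" and \<theta> :: real
  assumes "is_copula C" and "0 < \<theta>" and "\<theta> < 1"
  shows "((\<forall>u\<in>{0..1}. \<forall>v\<in>{0..1}. (\<lambda>n. fold_pow C n u v) \<longlonglongrightarrow> Co u v) \<longrightarrow>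
           (\<forall>u\<in>{0..1}. \<forall>v\<in>{0..1}.
              (\<lambda>n. fold_pow (\<lambda>x y. (1 - \<theta>) * C x y + \<theta> * copM x y) n u v) \<longlonglongrightarrow> Co u v))
       \<and> (\<forall>u\<in>{0..1}. \<forall>v\<in>{0..1}.
              (\<lambda>n. fold_pow (\<lambda>x y. (1 - \<theta>) * C x y + \<theta> * copPi x y) n u v) \<longlonglongrightarrow> copPi u v)"
proof (intro conjI impI ballI)
  fix u v :: real assume u: "u \<in> {0..1}" and v: "v \<in> {0..1}"
  show "(\<lambda>n. fold_pow (\<lambda>x y. (1 - \<theta>) * C x y + \<theta> * copPi x y) n u v) \<longlonglongrightarrow> copPi u v"
    by (rule part2[OF assms u v])
next
  fix u v :: real assume H: "\<forall>u\<in>{0..1}. \<forall>v\<in>{0..1}. (\<lambda>n. fold_pow C n u v) \<longlonglongrightarrow> Co u v"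
    and u: "u \<in> {0..1}" and v: "v \<in> {0..1}"
  have eq: "fold_pow (\<lambda>x y. (1 - \<theta>) * C x y + \<theta> * copM x y) n u v = (\<Sum>k\<le>n. wt \<theta> n k * fold_pow C k u v)" for n
    using part1_formula[OF assms(1), of \<theta> n] assms(2,3) u v by auto
  have lim: "(\<lambda>k. fold_pow C k u v) \<longlonglongrightarrow> Co u v" using H u v by blast
  have bnd: "\<bar>fold_pow C k u v\<bar> \<le> 1" for k
    using cop_range[OF fold_pow_copula[OF assms(1)] u v, of k] by simp
  show "(\<lambda>n. fold_pow (\<lambda>x y. (1 - \<theta>) * C x y + \<theta> * copM x y) n u v) \<longlonglongrightarrow> Co u v"
    unfolding eq by (rule binom_avg_limit[OF assms(2,3) lim bnd])
qed

end
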